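(* Let $\theta<\kappa$ be uncountable regular cardinals. The forcing $\mathbb P^-(\kappa,\theta)$ is $\kappa$-strategically closed.
   Context: $\mathrm{acc}(A)=\{\alpha\in A\mid\sup(A\cap\alpha)=\alpha>0\}$; $E^\kappa_{\ge\theta}$ is the set of ordinals below $\kappa$ of cofinality $\ge\theta$. $\mathbb P^-(\kappa,\theta)$ consists of all $p=\langle C^p_{\alpha,i}\mid\alpha\in\mathrm{acc}(\gamma^p+1),\ i(\alpha)^p\le i<\theta\rangle$ such that: (1) $\gamma^p\in\mathrm{acc}(\kappa)$; (2) for all $\alpha\in\mathrm{acc}(\gamma^p+1)$, $i(\alpha)^p<\theta$ and $\langle C^p_{\alpha,i}\mid i(\alpha)^p\le i<\theta\rangle$ is a $\subseteq$-increasing sequence of clubs in $\alpha$ with $\mathrm{acc}(\alpha)=\bigcup_i\mathrm{acc}(C^p_{\alpha,i})$; (3) for all $\alpha\in\mathrm{acc}(\gamma^p+1)$, $i(\alpha)^p\le i<\theta$ and $\bar\alpha\in\mathrm{acc}(C^p_{\alpha,i})\cap E^\kappa_{\ge\theta}$: $i(\bar\alpha)^p\le i$ and $C^p_{\bar\alpha,i}=C^p_{\alpha,i}\cap\bar\alpha$; (4) for all $\bar\alpha<\alpha$ in $\mathrm{acc}(\gamma^p+1)$ and all sufficiently large $i<\theta$, $C^p_{\bar\alpha,i}=C^p_{\alpha,i}\cap\bar\alpha$. It is ordered by end-extension, with an added maximum element $\emptyset$. For a poset $\mathbb P$ with maximum $1_{\mathbb P}$ and an ordinal $\beta$, the game $\Game_\beta(\mathbb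 P)$ has Players I and II alternately play conditions forming a $\le_{\mathbb P}$-decreasing sequence $\langle p_\alpha\mid\alpha<\beta\rangle$; Player I plays at odd stages, Player II at even stages (including limit stages), and Player II must play $p_0=1_{\mathbb P}$. Player I wins if at some limit $\alpha<\beta$ the sequence $\langle p_\eta\mid\eta<\alpha\rangle$ has no lower bound; otherwise Player II wins. $\mathbb P$ is $\beta$-strategically closed if Player II has a winning strategy in $\Game_\beta(\mathbb P)$. *)

theory Defs
  imports Main "HOL-Library.Equipollence" "HOL-Library.Countable_Set"
begin

text \<open>Ordinals below kappa are modelled as the elements of a well-ordered type 'k,
  whose order type is kappa.\<close>

definition limpt :: "'k::wellorder set \<Rightarrow> 'k \<Rightarrow> bool" where
  "limpt A \<alpha> \<longleftrightarrow> (\<exists>\<beta>. \<beta> < \<alpha>) \<and> (\<forall>\<beta><\<alpha>. \<exists>a\<in>A. \<beta> < a \<and> a < \<alpha>)"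

definition acc :: "'k::wellorder set \<Rightarrow> 'k set" where
  "acc A = {\<alpha>\<in>A. limpt A \<alpha>}"

text \<open>cf(alpha) \<ge> theta, for theta an infinite cardinal: every cofinal subset of alpha
  has cardinality at least |theta|\<close>
definition cof_ge :: "'k::wellorder \<Rightarrow> 'k \<Rightarrow> bool" where
  "cof_ge \<alpha> \<theta> \<longleftrightarrow> (\<forall>X. X \<subseteq> {x. x < \<alpha>} \<and> (\<forall>\<beta><\<alpha>. \<exists>x\<in>X. \<beta> \<le> x)
        \<longrightarrow> {x. x < \<theta>} \<lesssim> X)"

definition club_in :: "'k::wellorder set \<Rightarrow> 'k \<Rightarrow> bool" where
  "club_in C \<alpha> \<longleftrightarrow> C \<subseteq> {x. x < \<alpha>} \<and> (\<forall>\<beta><\<alpha>. \<exists>c\<in>C. \<beta> \<le> c)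
      \<and> (\<forall>\<beta><\<alpha>. limpt C \<beta> \<longrightarrow> \<beta> \<in> C)"

text \<open>A nonempty condition p: gamma^p, the function alpha \<mapsto> i(alpha)^p, and the clubs
  C^p_{alpha,i}; values outside acc(gamma^p+1) \<times> [i(alpha)^p, theta) are irrelevant.\<close>
record 'k pcond =
  gam :: 'k
  idx :: "'k \<Rightarrow> 'k"
  clb :: "'k \<Rightarrow> 'k \<Rightarrow> 'k set"

definition valid_cond :: "'k::wellorder \<Rightarrow> 'k pcond \<Rightarrow> bool" where
  "valid_cond \<theta> p \<longleftrightarrow>
     gam p \<in> acc UNIV
   \<and> (\<forall>\<alpha>\<in>acc {x. x \<le> gam p}.
        idx p \<alpha> < \<theta>
      \<and> (\<forall>i. idx p \<alpha> \<le> i \<and> i < \<theta> \<longrightarrow> club_in (clb p \<alpha> i) \<alpha>)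
      \<and> (\<forall>i j. idx p \<alpha> \<le> i \<and> i \<le> j \<and> j < \<theta> \<longrightarrow> clb p \<alpha> i \<subseteq> clb p \<alpha> j)
      \<and> acc {x. x < \<alpha>} = (\<Union>i\<in>{i. idx p \<alpha> \<le> i \<and> i < \<theta>}. acc (clb p \<alpha> i)))
   \<and> (\<forall>\<alpha>\<in>acc {x. x \<le> gam p}. \<forall>i. idx p \<alpha> \<le> i \<and> i < \<theta> \<longrightarrow>
        (\<forall>\<alpha>'\<in>acc (clb p \<alpha> i). cof_ge \<alpha>' \<theta> \<longrightarrow>
           idx p \<alpha>' \<le> i \<and> clb p \<alpha>' i = clb p \<alpha> i \<inter> {x. x < \<alpha>'}))
   \<and> (\<forall>\<alpha>'\<in>acc {x. x \<le> gam p}. \<forall>\<alpha>\<in>acc {x. x \<le> gam p}. \<alpha>' < \<alpha> \<longrightarrow>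
        (\<exists>j<\<theta>. idx p \<alpha> \<le> j \<and> idx p \<alpha>' \<le> j \<and>
           (\<forall>i. j \<le> i \<and> i < \<theta> \<longrightarrow> clb p \<alpha>' i = clb p \<alpha> i \<inter> {x. x < \<alpha>'})))"

text \<open>P^-(kappa,theta): None is the added maximum element (the empty condition).\<close>
definition Pminus :: "'k::wellorder \<Rightarrow> 'k pcond option set" where
  "Pminus \<theta> = {None} \<union> Some ` {p. valid_cond \<theta> p}"

definition Pminus_le :: "'k::wellorder \<Rightarrow> 'k pcond option \<Rightarrow> 'k pcond option \<Rightarrow> bool" where
  "Pminus_le \<theta> q p \<longleftrightarrow> (case p of None \<Rightarrow> True
     | Some p' \<Rightarrow> (case q of None \<Rightarrow> False
        | Some q' \<Rightarrow> gam p' \<le> gam q' \<and>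
            (\<forall>\<alpha>\<in>acc {x. x \<le> gam p'}. idx q' \<alpha> = idx p' \<alpha> \<and>
               (\<forall>i. idx p' \<alpha> \<le> i \<and> i < \<theta> \<longrightarrow> clb q' \<alpha> i = clb p' \<alpha> i))))"

text \<open>Parity of ordinals: alpha = lambda + n with lambda zero or limit, even iff n even.\<close>
definition osucc :: "'k::wellorder \<Rightarrow> 'k" where
  "osucc x = (LEAST y. x < y)"

definition ord_even :: "'k::wellorder \<Rightarrow> bool" where
  "ord_even \<alpha> \<longleftrightarrow> (\<exists>l n. (\<forall>\<beta><l. \<exists>\<delta><l. \<beta> < \<delta>) \<and> \<alpha> = (osucc ^^ (2 * n)) l)"

definition restr :: "('k::wellorder \<Rightarrow> 'c) \<Rightarrow> 'c \<Rightarrow> 'k \<Rightarrow> 'k \<Rightarrow> 'c" where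
  "restr s one \<alpha> = (\<lambda>\<eta>. if \<eta> < \<alpha> then s \<eta> else one)"

text \<open>Player II has a winning strategy in the game of length kappa = order type of 'k
  on the poset (P, le) with maximum one. A strategy sigma gives II's move at an even stage
  alpha from the position (restriction of the play below alpha). It is winning iff at every
  position reached by playing according to sigma (with Player I making legal moves),
  sigma's move is a legal move (a lower bound of all previous moves; 1 at stage 0).\<close>
definition strat_closed_full ::
  "'c set \<Rightarrow> ('c \<Rightarrow> 'c \<Rightarrow> bool) \<Rightarrow> 'c \<Rightarrow> ('k::wellorder itself) \<Rightarrow> bool" where
  "strat_closed_full P le one _ \<longleftrightarrow>
    (\<exists>\<sigma> :: 'k \<Rightarrow> ('k \<Rightarrow> 'c) \<Rightarrow> 'c.
      \<forall>\<alpha> (s :: 'k \<Rightarrow> 'c).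
        ord_even \<alpha>
        \<and> (\<forall>\<beta><\<alpha>. s \<beta> \<in> P)
        \<and> (\<forall>\<beta><\<alpha>. ord_even \<beta> \<longrightarrow> s \<beta> = \<sigma> \<beta> (restr s one \<beta>))
        \<and> (\<forall>\<beta><\<alpha>. \<not> ord_even \<beta> \<longrightarrow> (\<forall>\<eta><\<beta>. le (s \<beta>) (s \<eta>)))
        \<longrightarrow> \<sigma> \<alpha> (restr s one \<alpha>) \<in> P
          \<and> (\<forall>\<eta><\<alpha>. le (\<sigma> \<alpha> (restr s one \<alpha>)) (s \<eta>))
          \<and> ((\<forall>\<beta>. \<alpha> \<le> \<beta>) \<longrightarrow> \<sigma> \<alpha> (restr s one \<alpha>) = one))"

definition univ_uncountable_regular :: "'k::wellorder itself \<Rightarrow> bool" where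
  "univ_uncountable_regular _ \<longleftrightarrow>
     \<not> countable (UNIV :: 'k set)
   \<and> (\<forall>a::'k. {x. x < a} \<prec> (UNIV :: 'k set))
   \<and> (\<forall>X :: 'k set. (\<forall>a. \<exists>x\<in>X. a \<le> x) \<longrightarrow> (UNIV :: 'k set) \<lesssim> X)"

definition uncountable_regular :: "'k::wellorder \<Rightarrow> bool" where
  "uncountable_regular \<theta> \<longleftrightarrow>
     \<not> countable {x. x < \<theta>}
   \<and> (\<forall>a<\<theta>. {x. x < a} \<prec> {x. x < \<theta>})
   \<and> (\<forall>X. X \<subseteq> {x. x < \<theta>} \<and> (\<forall>a<\<theta>. \<exists>x\<in>X. a \<le> x) \<longrightarrow> {x. x < \<theta>} \<lesssim> X)"

end

theory Submission
  imports Defs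
begin


definition zk :: "'k::wellorder" where "zk = (LEAST x. True)"
definition lim0 :: "'k::wellorder \<Rightarrow> bool" where "lim0 l \<longleftrightarrow> (\<forall>\<beta><l. \<exists>\<delta><l. \<beta> < \<delta>)"

lemma zk_le[simp]: "zk \<le> x" unfolding zk_def by (rule Least_le) simp

lemma limpt_mono: "limpt A x \<Longrightarrow> A \<subseteq> B \<Longrightarrow> limpt B x"
  unfolding limpt_def by blast

lemma limpt_below: "limpt A x \<Longrightarrow> A \<inter> {y. y < x} \<subseteq> B \<Longrightarrow> limpt B x"
  unfolding limpt_def by blast

lemma acc_le_eq: "acc {x. x \<le> g} = {\<xi>. \<xi> \<le> g \<and> limpt UNIV \<xi>}"
proof (rule set_eqI, rule iffI)
  fix \<xi> assume "\<xi> \<in> acc {x. x \<le> g}"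
  then have "\<xi> \<le> g" "limpt {x. x \<le> g} \<xi>" unfolding acc_def by auto
  then show "\<xi> \<in> {\<xi>. \<xi> \<le> g \<and> limpt UNIV \<xi>}" using limpt_mono[of _ \<xi> UNIV] by simp
next
  fix \<xi> assume a: "\<xi> \<in> {\<xi>. \<xi> \<le> g \<and> limpt UNIV \<xi>}"
  have "UNIV \<inter> {y. y < \<xi>} \<subseteq> {x. x \<le> g}" using a by auto
  then have "limpt {x. x \<le> g} \<xi>" using a limpt_below[of UNIV \<xi>] by simp
  then show "\<xi> \<in> acc {x. x \<le> g}" using a unfolding acc_def by simp
qed

lemma acc_less_eq: "acc {x. x < g} = {\<xi>. \<xi> < g \<and> limpt UNIV \<xi>}"
proof (rule set_eqI, rule iffI)
  fix \<xi> assume "\<xi> \<in> acc {x. x < g}"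
  then have "\<xi> < g" "limpt {x. x < g} \<xi>" unfolding acc_def by auto
  then show "\<xi> \<in> {\<xi>. \<xi> < g \<and> limpt UNIV \<xi>}" using limpt_mono[of _ \<xi> UNIV] by simp
next
  fix \<xi> assume a: "\<xi> \<in> {\<xi>. \<xi> < g \<and> limpt UNIV \<xi>}"
  have "UNIV \<inter> {y. y < \<xi>} \<subseteq> {x. x < g}" using a by auto
  then have "limpt {x. x < g} \<xi>" using a limpt_below[of UNIV \<xi>] by simp
  then show "\<xi> \<in> acc {x. x < g}" using a unfolding acc_def by simp
qed

lemma acc_mono: "A \<subseteq> B \<Longrightarrow> acc A \<subseteq> acc B"
  unfolding acc_def using limpt_mono by blast

lemma limpt_UNIV: "limpt A x \<Longrightarrow> limpt UNIV x"
  using limpt_mono by blast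

lemma club_limpt_self: "club_in C a \<Longrightarrow> limpt UNIV a \<Longrightarrow> limpt C a"
  unfolding limpt_def
proof (intro conjI allI impI)
  assume c: "club_in C a" and l: "(\<exists>\<beta>. \<beta> < a) \<and> (\<forall>\<beta><a. \<exists>a'\<in>UNIV. \<beta> < a' \<and> a' < a)"
  then show "\<exists>\<beta>. \<beta> < a" by blast
  fix b assume "b < a"
  then obtain a' where a': "b < a'" "a' < a" using l by blast
  then obtain c' where "c' \<in> C" "a' \<le> c'" using c unfolding club_in_def by blast
  moreover have "c' < a" using c \<open>c' \<in> C\<close> unfolding club_in_def by blast
  ultimately show "\<exists>a'\<in>C. b < a' \<and> a' < a" using a' by (meson less_le_trans)
qed

locale setting =
  fixes \<theta> :: "'k::wellorder"
  assumes nomax: "\<And>x::'k. \<exists>y. x < y"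
    and ctbl_bdd: "\<And>X::'k set. countable X \<Longrightarrow> \<exists>u. \<forall>x\<in>X. x < u"
    and small_bdd: "\<And>(X::'k set) a. X \<lesssim> {x::'k. x < a} \<Longrightarrow> \<exists>u. \<forall>x\<in>X. x < u"
    and theta_pos: "zk < \<theta>"
begin

lemma osucc_gt: "(x::'k) < osucc x"
  unfolding osucc_def by (rule LeastI_ex) (rule nomax)

lemma osucc_least: "(x::'k) < y \<Longrightarrow> osucc x \<le> y"
  unfolding osucc_def by (rule Least_le)

lemma less_osucc_iff: "(y::'k) < osucc x \<longleftrightarrow> y \<le> x"
  using osucc_gt osucc_least by (meson leD leI le_less_trans)

lemma osucc_mono: "(x::'k) < y \<Longrightarrow> osucc x < osucc y"
  by (meson le_less_trans osucc_gt osucc_least)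

lemma osucc_inj: "osucc (x::'k) = osucc y \<Longrightarrow> x = y"
  by (metis less_irrefl linorder_neqE osucc_mono)

definition pred :: "'k \<Rightarrow> 'k" where "pred a = (THE x. osucc (x::'k) = a)"

lemma pred_osucc[simp]: "pred (osucc x) = x"
  unfolding pred_def using osucc_inj by blast

lemma lim0_osucc: "lim0 (a::'k) \<Longrightarrow> x < a \<Longrightarrow> osucc x < a"
  unfolding lim0_def by (meson le_less_trans osucc_least)

lemma decomp: "\<exists>l n. lim0 l \<and> (x::'k) = (osucc ^^ n) l"
proof (induction x rule: less_induct)
  case (less x)
  show ?case
  proof (cases "lim0 x")
    case True
    then show ?thesis by (metis funpow_0)
  next
    case False
    then obtain b where b: "b < x" "\<forall>d<x. \<not> b < d" unfolding lim0_def by blast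
    have "osucc b \<le> x" using b osucc_least by blast
    then have "x = osucc b"
      using b(2) osucc_gt[of b] by (metis le_less)
    moreover obtain l n where "lim0 l" "b = (osucc ^^ n) l" using less b by blast
    ultimately show ?thesis by (metis funpow.simps(2) o_apply)
  qed
qed

lemma even_osucc2: "ord_even (x::'k) \<Longrightarrow> ord_even (osucc (osucc x))"
  unfolding ord_even_def
  apply clarify
  subgoal for l n
    apply (rule exI[of _ l], rule exI[of _ "Suc n"])
    by (simp add: lim0_def)
  done

lemma even_cofinal: "lim0 (a::'k) \<Longrightarrow> x < a \<Longrightarrow> \<exists>y. ord_even y \<and> x \<le> y \<and> y < a"
proof -
  assume a: "lim0 a" "x < a"
  obtain l n where ln: "lim0 l" "x = (osucc ^^ n) l" using decomp by blast
  show ?thesis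
  proof (cases "even n")
    case True
    then obtain m where "n = 2 * m" by auto
    then have "ord_even x" using ln unfolding ord_even_def lim0_def by blast
    then show ?thesis using a by auto
  next
    case False
    then obtain m where m: "Suc n = 2 * m" by (metis dvd_def even_Suc)
    have "osucc x = (osucc ^^ (2*m)) l" using ln m by (metis funpow.simps(2) o_apply)
    then have "ord_even (osucc x)" using ln unfolding ord_even_def lim0_def by blast
    then show ?thesis using a lim0_osucc osucc_gt by (meson less_imp_le)
  qed
qed

lemma even_succ: "ord_even (a::'k) \<Longrightarrow> \<not> lim0 a \<Longrightarrow> \<exists>b. ord_even b \<and> a = osucc (osucc b)"
proof -
  assume a: "ord_even a" "\<not> lim0 a"
  then obtain l n where ln: "lim0 l" "a = (osucc ^^ (2*n)) l"
    unfolding ord_even_def lim0_def by blast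
  then obtain m where "n = Suc m" using a by (cases n) auto
  then have "a = osucc (osucc ((osucc ^^ (2*m)) l))" using ln by simp
  moreover have "ord_even ((osucc ^^ (2*m)) l)" using ln unfolding ord_even_def lim0_def by blast
  ultimately show ?thesis by blast
qed

definition nextlim :: "'k \<Rightarrow> 'k" where
  "nextlim d = (LEAST y::'k. d < y \<and> limpt UNIV y)"

lemma nextlim_ex: "\<exists>y. (d::'k) < y \<and> limpt UNIV y"
proof -
  let ?X = "range (\<lambda>n. (osucc ^^ n) d)"
  obtain u where u: "\<forall>x\<in>?X. x < u" using ctbl_bdd[of ?X] by blast
  define y where "y = (LEAST u. \<forall>x\<in>?X. x < u)"
  have y: "\<forall>x\<in>?X. x < y" unfolding y_def using u by (rule LeastI)
  have "d < y" using y by (metis funpow_0 rangeI)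
  moreover have "limpt UNIV y"
    unfolding limpt_def
  proof (intro conjI allI impI)
    show "\<exists>b. b < y" using \<open>d < y\<close> by blast
  next
    fix b assume "b < y"
    then have "\<not> (\<forall>x\<in>?X. x < b)" unfolding y_def using not_less_Least by blast
    then obtain n where "b \<le> (osucc ^^ n) d" by (auto simp: not_less)
    then have "b < (osucc ^^ Suc n) d" using osucc_gt by (simp add: le_less_trans)
    then show "\<exists>a\<in>UNIV. b < a \<and> a < y" using y by blast
  qed
  ultimately show ?thesis by blast
qed

lemma nextlim_both: "(d::'k) < nextlim d \<and> limpt UNIV (nextlim d)"
  unfolding nextlim_def by (rule LeastI_ex) (rule nextlim_ex)

lemma nextlim: "(d::'k) < nextlim d" "limpt UNIV (nextlim d)"
  "d < x \<Longrightarrow> x < nextlim d \<Longrightarrow> \<not> limpt UNIV x"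
  using nextlim_both apply blast
  using nextlim_both apply blast
  unfolding nextlim_def using not_less_Least[of x "\<lambda>y. d < y \<and> limpt UNIV y"] by simp

end


definition levok :: "'k::wellorder \<Rightarrow> ('k \<Rightarrow> 'k) \<Rightarrow> ('k \<Rightarrow> 'k \<Rightarrow> 'k set) \<Rightarrow> 'k \<Rightarrow> bool" where
  "levok \<theta> I C a \<longleftrightarrow> I a < \<theta>
      \<and> (\<forall>i. I a \<le> i \<and> i < \<theta> \<longrightarrow> club_in (C a i) a)
      \<and> (\<forall>i j. I a \<le> i \<and> i \<le> j \<and> j < \<theta> \<longrightarrow> C a i \<subseteq> C a j)
      \<and> acc {x. x < a} = (\<Union>i\<in>{i. I a \<le> i \<and> i < \<theta>}. acc (C a i))
      \<and> (\<forall>i. I a \<le> i \<and> i < \<theta> \<longrightarrow>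
        (\<forall>a'\<in>acc (C a i). cof_ge a' \<theta> \<longrightarrow> I a' \<le> i \<and> C a' i = C a i \<inter> {x. x < a'}))"

definition pairok :: "'k::wellorder \<Rightarrow> ('k \<Rightarrow> 'k) \<Rightarrow> ('k \<Rightarrow> 'k \<Rightarrow> 'k set) \<Rightarrow> 'k \<Rightarrow> 'k \<Rightarrow> bool" where
  "pairok \<theta> I C a' a \<longleftrightarrow> (\<exists>j<\<theta>. I a \<le> j \<and> I a' \<le> j \<and>
           (\<forall>i. j \<le> i \<and> i < \<theta> \<longrightarrow> C a' i = C a i \<inter> {x. x < a'}))"

definition agree :: "'k::wellorder \<Rightarrow> ('k \<Rightarrow> 'k) \<Rightarrow> ('k \<Rightarrow> 'k \<Rightarrow> 'k set) \<Rightarrow> ('k \<Rightarrow> 'k) \<Rightarrow> ('k \<Rightarrow> 'k \<Rightarrow> 'k set) \<Rightarrow> 'k \<Rightarrow> bool" where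
  "agree \<theta> I C I' C' a \<longleftrightarrow> (\<forall>b. b \<le> a \<and> limpt UNIV b \<longrightarrow> I' b = I b \<and> (\<forall>i. I b \<le> i \<and> i < \<theta> \<longrightarrow> C' b i = C b i))"

lemma le_Some: "Pminus_le \<theta> (Some q) (Some p) \<longleftrightarrow> gam p \<le> gam q \<and> agree \<theta> (idx p) (clb p) (idx q) (clb q) (gam p)"
  unfolding Pminus_le_def agree_def acc_le_eq by simp

lemma le_None[simp]: "Pminus_le \<theta> x None" "\<not> Pminus_le \<theta> None (Some p)"
  unfolding Pminus_le_def by auto

lemma agree_sym: "agree \<theta> I C I' C' a \<Longrightarrow> agree \<theta> I' C' I C a"
  unfolding agree_def by simp

lemma agree_mono: "agree \<theta> I C I' C' a \<Longrightarrow> b \<le> a \<Longrightarrow> agree \<theta> I C I' C' b"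
  unfolding agree_def by (meson order.trans)

lemma agree_trans: "agree \<theta> I C I' C' a \<Longrightarrow> agree \<theta> I' C' I'' C'' a \<Longrightarrow> agree \<theta> I C I'' C'' a"
  unfolding agree_def by simp

lemma club_sub: "club_in C a \<Longrightarrow> C \<subseteq> {x. x < a}"
  unfolding club_in_def by blast

lemma acc_sub: "acc C \<subseteq> C"
  unfolding acc_def by blast

lemma acc_lim: "x \<in> acc C \<Longrightarrow> limpt UNIV x"
  unfolding acc_def using limpt_UNIV by blast

lemma levokD1:
  assumes "levok \<theta> I C a"
  shows "I a < \<theta>"
  using assms unfolding levok_def by (elim conjE) assumption

lemma levokD2:
  assumes "levok \<theta> I C a"
  shows "\<forall>i. I a \<le> i \<and> i < \<theta> \<longrightarrow> club_in (C a i) a"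
  using assms unfolding levok_def by (elim conjE) assumption

lemma levokD3:
  assumes "levok \<theta> I C a"
  shows "\<forall>i j. I a \<le> i \<and> i \<le> j \<and> j < \<theta> \<longrightarrow> C a i \<subseteq> C a j"
  using assms unfolding levok_def by (elim conjE) assumption

lemma levokD4:
  assumes "levok \<theta> I C a"
  shows "acc {x. x < a} = (\<Union>i\<in>{i. I a \<le> i \<and> i < \<theta>}. acc (C a i))"
  using assms unfolding levok_def by (elim conjE) assumption

lemma levokD5:
  assumes "levok \<theta> I C a"
  shows "\<forall>i. I a \<le> i \<and> i < \<theta> \<longrightarrow>
        (\<forall>a'\<in>acc (C a i). cof_ge a' \<theta> \<longrightarrow> I a' \<le> i \<and> C a' i = C a i \<inter> {x. x < a'})"
  using assms unfolding levok_def by (elim conjE) assumption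

lemma validI:
  assumes "limpt UNIV (gam p)"
    "\<And>a. a \<le> gam p \<Longrightarrow> limpt UNIV a \<Longrightarrow> levok \<theta> (idx p) (clb p) a"
    "\<And>a' a. a' \<le> gam p \<Longrightarrow> a \<le> gam p \<Longrightarrow> limpt UNIV a' \<Longrightarrow> limpt UNIV a \<Longrightarrow> a' < a
       \<Longrightarrow> pairok \<theta> (idx p) (clb p) a' a"
  shows "valid_cond \<theta> p"
  unfolding valid_cond_def acc_le_eq
proof (intro conjI)
  show "gam p \<in> acc UNIV" unfolding acc_def using assms(1) by simp
next
  show "\<forall>\<alpha>\<in>{\<xi>. \<xi> \<le> gam p \<and> limpt UNIV \<xi>}.
       idx p \<alpha> < \<theta> \<and>
       (\<forall>i. idx p \<alpha> \<le> i \<and> i < \<theta> \<longrightarrow> club_in (clb p \<alpha> i) \<alpha>) \<and>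
       (\<forall>i j. idx p \<alpha> \<le> i \<and> i \<le> j \<and> j < \<theta> \<longrightarrow> clb p \<alpha> i \<subseteq> clb p \<alpha> j) \<and>
       acc {x. x < \<alpha>} = (\<Union>i\<in>{i. idx p \<alpha> \<le> i \<and> i < \<theta>}. acc (clb p \<alpha> i))"
  proof
    fix a assume "a \<in> {\<xi>. \<xi> \<le> gam p \<and> limpt UNIV \<xi>}"
    then have "levok \<theta> (idx p) (clb p) a" using assms(2) by simp
    then show "idx p a < \<theta> \<and>
       (\<forall>i. idx p a \<le> i \<and> i < \<theta> \<longrightarrow> club_in (clb p a i) a) \<and>
       (\<forall>i j. idx p a \<le> i \<and> i \<le> j \<and> j < \<theta> \<longrightarrow> clb p a i \<subseteq> clb p a j) \<and>
       acc {x. x < a} = (\<Union>i\<in>{i. idx p a \<le> i \<and> i < \<theta>}. acc (clb p a i))"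
      unfolding levok_def by (elim conjE) (intro conjI; assumption)
  qed
next
  show "\<forall>\<alpha>\<in>{\<xi>. \<xi> \<le> gam p \<and> limpt UNIV \<xi>}. \<forall>i. idx p \<alpha> \<le> i \<and> i < \<theta> \<longrightarrow>
        (\<forall>\<alpha>'\<in>acc (clb p \<alpha> i). cof_ge \<alpha>' \<theta> \<longrightarrow>
           idx p \<alpha>' \<le> i \<and> clb p \<alpha>' i = clb p \<alpha> i \<inter> {x. x < \<alpha>'})"
  proof
    fix a assume "a \<in> {\<xi>. \<xi> \<le> gam p \<and> limpt UNIV \<xi>}"
    then have "levok \<theta> (idx p) (clb p) a" using assms(2) by simp
    then show "\<forall>i. idx p a \<le> i \<and> i < \<theta> \<longrightarrow>
        (\<forall>\<alpha>'\<in>acc (clb p a i). cof_ge \<alpha>' \<theta> \<longrightarrow>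
           idx p \<alpha>' \<le> i \<and> clb p \<alpha>' i = clb p a i \<inter> {x. x < \<alpha>'})"
      by (rule levokD5)
  qed
next
  show "\<forall>\<alpha>'\<in>{\<xi>. \<xi> \<le> gam p \<and> limpt UNIV \<xi>}. \<forall>\<alpha>\<in>{\<xi>. \<xi> \<le> gam p \<and> limpt UNIV \<xi>}. \<alpha>' < \<alpha> \<longrightarrow>
        (\<exists>j<\<theta>. idx p \<alpha> \<le> j \<and> idx p \<alpha>' \<le> j \<and>
           (\<forall>i. j \<le> i \<and> i < \<theta> \<longrightarrow> clb p \<alpha>' i = clb p \<alpha> i \<inter> {x. x < \<alpha>'}))"
  proof (intro ballI impI)
    fix a' a assume "a' \<in> {\<xi>. \<xi> \<le> gam p \<and> limpt UNIV \<xi>}" "a \<in> {\<xi>. \<xi> \<le> gam p \<and> limpt UNIV \<xi>}" "a' < a"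
    then have "pairok \<theta> (idx p) (clb p) a' a" using assms(3) by simp
    then show "\<exists>j<\<theta>. idx p a \<le> j \<and> idx p a' \<le> j \<and>
           (\<forall>i. j \<le> i \<and> i < \<theta> \<longrightarrow> clb p a' i = clb p a i \<inter> {x. x < a'})"
      unfolding pairok_def .
  qed
qed

lemma validD:
  assumes "valid_cond \<theta> p"
  shows "limpt UNIV (gam p)"
    "\<And>a. a \<le> gam p \<Longrightarrow> limpt UNIV a \<Longrightarrow> levok \<theta> (idx p) (clb p) a"
    "\<And>a' a. a' \<le> gam p \<Longrightarrow> a \<le> gam p \<Longrightarrow> limpt UNIV a' \<Longrightarrow> limpt UNIV a \<Longrightarrow> a' < a
       \<Longrightarrow> pairok \<theta> (idx p) (clb p) a' a"
proof -
  have V1: "gam p \<in> acc UNIV"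
    using assms unfolding valid_cond_def acc_le_eq by (elim conjE) assumption
  have V2: "\<forall>\<alpha>\<in>{\<xi>. \<xi> \<le> gam p \<and> limpt UNIV \<xi>}.
       idx p \<alpha> < \<theta> \<and>
       (\<forall>i. idx p \<alpha> \<le> i \<and> i < \<theta> \<longrightarrow> club_in (clb p \<alpha> i) \<alpha>) \<and>
       (\<forall>i j. idx p \<alpha> \<le> i \<and> i \<le> j \<and> j < \<theta> \<longrightarrow> clb p \<alpha> i \<subseteq> clb p \<alpha> j) \<and>
       acc {x. x < \<alpha>} = (\<Union>i\<in>{i. idx p \<alpha> \<le> i \<and> i < \<theta>}. acc (clb p \<alpha> i))"
    using assms unfolding valid_cond_def acc_le_eq by (elim conjE) assumption
  have V3: "\<forall>\<alpha>\<in>{\<xi>. \<xi> \<le> gam p \<and> limpt UNIV \<xi>}. \<forall>i. idx p \<alpha> \<le> i \<and> i < \<theta> \<longrightarrow>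
        (\<forall>\<alpha>'\<in>acc (clb p \<alpha> i). cof_ge \<alpha>' \<theta> \<longrightarrow>
           idx p \<alpha>' \<le> i \<and> clb p \<alpha>' i = clb p \<alpha> i \<inter> {x. x < \<alpha>'})"
    using assms unfolding valid_cond_def acc_le_eq by (elim conjE) assumption
  have V4: "\<forall>\<alpha>'\<in>{\<xi>. \<xi> \<le> gam p \<and> limpt UNIV \<xi>}. \<forall>\<alpha>\<in>{\<xi>. \<xi> \<le> gam p \<and> limpt UNIV \<xi>}. \<alpha>' < \<alpha> \<longrightarrow>
        (\<exists>j<\<theta>. idx p \<alpha> \<le> j \<and> idx p \<alpha>' \<le> j \<and>
           (\<forall>i. j \<le> i \<and> i < \<theta> \<longrightarrow> clb p \<alpha>' i = clb p \<alpha> i \<inter> {x. x < \<alpha>'}))"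
    using assms unfolding valid_cond_def acc_le_eq by (elim conjE) assumption
  note V = V1 V2 V3 V4
  show "limpt UNIV (gam p)" using V(1) unfolding acc_def by simp
  show "levok \<theta> (idx p) (clb p) a" if "a \<le> gam p" "limpt UNIV a" for a
  proof -
    have a: "a \<in> {\<xi>. \<xi> \<le> gam p \<and> limpt UNIV \<xi>}" using that by simp
    have 1: "idx p a < \<theta> \<and>
       (\<forall>i. idx p a \<le> i \<and> i < \<theta> \<longrightarrow> club_in (clb p a i) a) \<and>
       (\<forall>i j. idx p a \<le> i \<and> i \<le> j \<and> j < \<theta> \<longrightarrow> clb p a i \<subseteq> clb p a j) \<and>
       acc {x. x < a} = (\<Union>i\<in>{i. idx p a \<le> i \<and> i < \<theta>}. acc (clb p a i))"
      using bspec[OF V(2) a] .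
    have 2: "\<forall>i. idx p a \<le> i \<and> i < \<theta> \<longrightarrow>
        (\<forall>\<alpha>'\<in>acc (clb p a i). cof_ge \<alpha>' \<theta> \<longrightarrow>
           idx p \<alpha>' \<le> i \<and> clb p \<alpha>' i = clb p a i \<inter> {x. x < \<alpha>'})"
      using bspec[OF V(3) a] .
    show ?thesis unfolding levok_def using 1 2 by (elim conjE) (intro conjI; assumption)
  qed
  show "pairok \<theta> (idx p) (clb p) a' a" if "a' \<le> gam p" "a \<le> gam p" "limpt UNIV a'" "limpt UNIV a" "a' < a" for a' a
  proof -
    have a: "a \<in> {\<xi>. \<xi> \<le> gam p \<and> limpt UNIV \<xi>}" "a' \<in> {\<xi>. \<xi> \<le> gam p \<and> limpt UNIV \<xi>}" using that by simp_all
    show ?thesis unfolding pairok_def using bspec[OF bspec[OF V(4) a(2)] a(1)] that(5) by (rule mp)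
  qed
qed

lemma levok_transfer:
  assumes "agree \<theta> I C I' C' a" "levok \<theta> I C a" "limpt UNIV a"
  shows "levok \<theta> I' C' a"
proof -
  have ag: "I' b = I b \<and> (\<forall>i. I b \<le> i \<and> i < \<theta> \<longrightarrow> C' b i = C b i)" if "b \<le> a" "limpt UNIV b" for b
    using assms(1) that unfolding agree_def by simp
  have Ia: "I' a = I a" using ag[of a] assms(3) by simp
  have Ca: "C' a i = C a i" if "I a \<le> i" "i < \<theta>" for i using ag[of a] assms(3) that by simp
  have L1: "I a < \<theta>" using levokD1[OF assms(2)] .
  have L2: "\<And>i. I a \<le> i \<Longrightarrow> i < \<theta> \<Longrightarrow> club_in (C a i) a" using levokD2[OF assms(2)] by simp
  have L3: "\<And>i j. I a \<le> i \<Longrightarrow> i \<le> j \<Longrightarrow> j < \<theta> \<Longrightarrow> C a i \<subseteq> C a j" using levokD3[OF assms(2)] by simp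
  have L4: "acc {x. x < a} = (\<Union>i\<in>{i. I a \<le> i \<and> i < \<theta>}. acc (C a i))" using levokD4[OF assms(2)] .
  have L5: "\<And>i a'. I a \<le> i \<Longrightarrow> i < \<theta> \<Longrightarrow> a'\<in>acc (C a i) \<Longrightarrow> cof_ge a' \<theta> \<Longrightarrow> I a' \<le> i \<and> C a' i = C a i \<inter> {x. x < a'}"
    using levokD5[OF assms(2)] by simp
  note L = L1 L2 L3 L4 L5
  show ?thesis unfolding levok_def Ia
  proof (intro conjI allI impI ballI)
    show "I a < \<theta>" by (rule L(1))
    show "club_in (C' a i) a" if "I a \<le> i \<and> i < \<theta>" for i using that L(2) Ca by simp
    show "C' a i \<subseteq> C' a j" if "I a \<le> i \<and> i \<le> j \<and> j < \<theta>" for i j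
    proof -
      have "I a \<le> j" "i < \<theta>" using that by (auto intro: order.trans le_less_trans)
      then show ?thesis using that L(3)[of i j] Ca[of i] Ca[of j] by simp
    qed
    show "acc {x. x < a} = (\<Union>i\<in>{i. I a \<le> i \<and> i < \<theta>}. acc (C' a i))"
      using L(4) Ca by simp
    fix i a' assume i: "I a \<le> i \<and> i < \<theta>" and a': "a' \<in> acc (C' a i)" "cof_ge a' \<theta>"
    have a'2: "a' \<in> acc (C a i)" using a' i Ca by simp
    have "a' \<in> C a i" using a'2 acc_sub by blast
    moreover have "C a i \<subseteq> {x. x < a}" using club_sub[OF L(2)] i by simp
    ultimately have "a' < a" by blast
    moreover have "limpt UNIV a'" using a'2 acc_lim by blast
    ultimately have ag': "I' a' = I a'" "\<And>i. I a' \<le> i \<Longrightarrow> i < \<theta> \<Longrightarrow> C' a' i = C a' i"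
      using ag[of a'] by auto
    have h: "I a' \<le> i \<and> C a' i = C a i \<inter> {x. x < a'}" using L(5) i a'2 a'(2) by blast
    then show "I' a' \<le> i" using ag' by simp
    show "C' a' i = C' a i \<inter> {x. x < a'}"
      using h ag' i Ca by simp
  qed
qed

lemma pairok_transfer:
  assumes "agree \<theta> I C I' C' a" "pairok \<theta> I C a' a" "limpt UNIV a" "limpt UNIV a'" "a' < a"
  shows "pairok \<theta> I' C' a' a"
proof -
  have ag: "I' b = I b \<and> (\<forall>i. I b \<le> i \<and> i < \<theta> \<longrightarrow> C' b i = C b i)" if "b \<le> a" "limpt UNIV b" for b
    using assms(1) that unfolding agree_def by blast
  obtain j where j: "j < \<theta>" "I a \<le> j" "I a' \<le> j" "\<forall>i. j \<le> i \<and> i < \<theta> \<longrightarrow> C a' i = C a i \<inter> {x. x < a'}"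
    using assms(2) unfolding pairok_def by blast
  have 1: "I' a = I a" "I' a' = I a'" using ag[of a] ag[of a'] assms(3-5) by auto
  show ?thesis unfolding pairok_def
  proof (intro exI[of _ j] conjI allI impI)
    show "j < \<theta>" "I' a \<le> j" "I' a' \<le> j" using j 1 by auto
    fix i assume i: "j \<le> i \<and> i < \<theta>"
    then have "I a \<le> i" "I a' \<le> i" using j(2,3) by (auto intro: order.trans)
    then have "C' a i = C a i" "C' a' i = C a' i" using ag[of a] ag[of a'] assms(3-5) i by auto
    then show "C' a' i = C' a i \<inter> {x. x < a'}" using j(4) i by simp
  qed
qed

lemma le_trans:
  assumes "Pminus_le \<theta> c b" "Pminus_le \<theta> b a"
  shows "Pminus_le \<theta> c a"
proof (cases a)
  case None then show ?thesis by simp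
next
  case (Some pa)
  then obtain pb where b: "b = Some pb" using assms(2) by (cases b) auto
  then obtain pc where c: "c = Some pc" using assms(1) by (cases c) auto
  have 1: "gam pa \<le> gam pb" "agree \<theta> (idx pa) (clb pa) (idx pb) (clb pb) (gam pa)"
    using assms(2) Some b le_Some by blast+
  have 2: "gam pb \<le> gam pc" "agree \<theta> (idx pb) (clb pb) (idx pc) (clb pc) (gam pb)"
    using assms(1) c b le_Some by blast+
  have "agree \<theta> (idx pb) (clb pb) (idx pc) (clb pc) (gam pa)" using agree_mono 2 1 by blast
  then have "agree \<theta> (idx pa) (clb pa) (idx pc) (clb pc) (gam pa)" using agree_trans 1 by blast
  then show ?thesis using Some c le_Some 1 2 by (metis order.trans)
qed

definition coh :: "'k::wellorder \<Rightarrow> 'k pcond \<Rightarrow> 'k pcond \<Rightarrow> bool" where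
  "coh \<theta> p' p \<longleftrightarrow> gam p' < gam p \<and> (\<forall>i. i < \<theta> \<longrightarrow>
     clb p' (gam p') i = clb p (gam p) i \<inter> {x. x < gam p'} \<and> gam p' \<in> clb p (gam p) i)"

lemma coh_trans:
  assumes "coh \<theta> a b" "coh \<theta> b c" shows "coh \<theta> a c"
  unfolding coh_def
proof (intro conjI allI impI)
  have ab: "gam a < gam b" "\<And>i. i < \<theta> \<Longrightarrow> clb a (gam a) i = clb b (gam b) i \<inter> {x. x < gam a}"
     "\<And>i. i < \<theta> \<Longrightarrow> gam a \<in> clb b (gam b) i" using assms(1) unfolding coh_def by simp_all
  have bc: "gam b < gam c" "\<And>i. i < \<theta> \<Longrightarrow> clb b (gam b) i = clb c (gam c) i \<inter> {x. x < gam b}"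
     "\<And>i. i < \<theta> \<Longrightarrow> gam b \<in> clb c (gam c) i" using assms(2) unfolding coh_def by simp_all
  show "gam a < gam c" using ab(1) bc(1) by (rule less_trans)
  fix i assume i: "i < \<theta>"
  have "{x. x < gam b} \<inter> {x. x < gam a} = {x. x < gam a}" using ab(1) by auto
  then show "clb a (gam a) i = clb c (gam c) i \<inter> {x. x < gam a}" using ab(2)[OF i] bc(2)[OF i] by (simp add: Int_assoc)
  show "gam a \<in> clb c (gam c) i" using ab(3)[OF i] bc(2)[OF i] by simp
qed



lemma struct_lemma:
  fixes C :: "'k::wellorder set"
  assumes club: "club_in C \<mu>" and lm: "limpt UNIV \<mu>" and md: "\<mu> \<le> \<delta>" and dg: "\<delta> < \<gamma>"
    and gap: "\<And>x. \<delta> < x \<Longrightarrow> x < \<gamma> \<Longrightarrow> \<not> limpt UNIV x"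
    and B: "B = C \<union> {\<mu>} \<union> {x. \<delta> \<le> x \<and> x < \<gamma>}"
  shows "club_in B \<gamma>" "\<And>a'. a' \<in> acc B \<Longrightarrow> a' \<in> acc C \<or> a' = \<mu>"
    "B \<inter> {x. x < \<mu>} = C" "\<mu> \<in> B" "limpt B \<mu>" "B \<subseteq> {x. x < \<gamma>}"
proof -
  have Csub: "C \<subseteq> {x. x < \<mu>}" using club_sub[OF club] .
  have Cu: "\<And>b. b < \<mu> \<Longrightarrow> \<exists>c\<in>C. b \<le> c" using club unfolding club_in_def by simp
  have Ccl: "\<And>b. b < \<mu> \<Longrightarrow> limpt C b \<Longrightarrow> b \<in> C" using club unfolding club_in_def by simp
  show Bsub: "B \<subseteq> {x. x < \<gamma>}"
  proof
    fix x assume "x \<in> B"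
    then consider "x \<in> C" | "x = \<mu>" | "\<delta> \<le> x \<and> x < \<gamma>" using B by blast
    then show "x \<in> {x. x < \<gamma>}"
    proof cases
      case 1 then have "x < \<mu>" using Csub by blast
      then show ?thesis using md dg by simp
    next
      case 2 then show ?thesis using md dg by simp
    qed simp
  qed
  have below: "B \<inter> {x. x < b} \<subseteq> C" if "b \<le> \<mu>" for b
  proof
    fix x assume x: "x \<in> B \<inter> {x. x < b}"
    then have "x < \<mu>" "x < \<delta>" using that md by auto
    then show "x \<in> C" using x B by auto
  qed
  show "B \<inter> {x. x < \<mu>} = C" using below[of \<mu>] Csub B by auto
  show muB: "\<mu> \<in> B" using B by simp
  show lB: "limpt B \<mu>" using club_limpt_self[OF club lm] B by (auto intro: limpt_mono)
  have nomid: False if h: "limpt B b" "\<mu> < b" "b \<le> \<delta>" for b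
  proof -
    obtain a where a: "a \<in> B" "\<mu> < a" "a < b" using h(1,2) unfolding limpt_def by blast
    have "a \<notin> C" using a(2) Csub by auto
    moreover have "a \<noteq> \<mu>" using a(2) by simp
    moreover have "\<not> \<delta> \<le> a" using a(3) h(3) by simp
    ultimately show False using a(1) B by blast
  qed
  show "club_in B \<gamma>" unfolding club_in_def
  proof (intro conjI allI impI)
    show "B \<subseteq> {x. x < \<gamma>}" by (rule Bsub)
    fix b assume b: "b < \<gamma>"
    show "\<exists>c\<in>B. b \<le> c"
    proof (cases "b \<le> \<delta>")
      case True then show ?thesis using B dg by auto
    next
      case False then show ?thesis using B b by auto
    qed
    assume lb: "limpt B b"
    show "b \<in> B"
    proof (cases "\<delta> \<le> b")
      case True then show ?thesis using B b by simp
    next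
      case False
      then have bd: "b < \<delta>" by simp
      consider "b = \<mu>" | "b < \<mu>" | "\<mu> < b" by fastforce
      then show ?thesis
      proof cases
        case 1 then show ?thesis using muB by simp
      next
        case 2
        then have "limpt C b" using limpt_below[OF lb below[of b]] by simp
        then have "b \<in> C" using Ccl 2 by simp
        then show ?thesis using B by simp
      next
        case 3 then show ?thesis using nomid[OF lb 3] bd by (simp add: less_imp_le)
      qed
    qed
  qed
  fix a' assume a': "a' \<in> acc B"
  then have a'B: "a' \<in> B" and la: "limpt B a'" unfolding acc_def by auto
  have a'g: "a' < \<gamma>" using a'B Bsub by blast
  consider "a' = \<mu>" | "a' < \<mu>" | "\<mu> < a'" by fastforce
  then show "a' \<in> acc C \<or> a' = \<mu>"
  proof cases
    case 1 then show ?thesis by simp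
  next
    case 2
    then have "limpt C a'" using limpt_below[OF la below[of a']] by simp
    moreover have "a' \<in> C" using a'B 2 md B by auto
    ultimately show ?thesis unfolding acc_def by simp
  next
    case 3
    then have "a' \<notin> C" using Csub by auto
    then have "\<delta> \<le> a'" using a'B 3 B by auto
    moreover have "\<not> \<delta> < a'" using gap[of a'] a'g limpt_UNIV[OF la] by blast
    ultimately have "a' = \<delta>" by simp
    then show ?thesis using nomid[OF la 3] by simp
  qed
qed

lemma iv_lemma:
  fixes \<delta> :: "'k::wellorder"
  assumes dg: "\<delta> < \<gamma>" and gap: "\<And>x. \<delta> < x \<Longrightarrow> x < \<gamma> \<Longrightarrow> \<not> limpt UNIV x"
  shows "club_in {x. \<delta> \<le> x \<and> x < \<gamma>} \<gamma>" "acc {x. \<delta> \<le> x \<and> x < \<gamma>} = {}"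
proof -
  let ?I = "{x. \<delta> \<le> x \<and> x < \<gamma>}"
  have lI: "\<delta> < b" if h: "limpt ?I b" for b
  proof -
    obtain c where "c < b" using h unfolding limpt_def by blast
    then obtain a where "a \<in> ?I" "a < b" using h unfolding limpt_def by blast
    then show ?thesis using le_less_trans by blast
  qed
  show "club_in ?I \<gamma>" unfolding club_in_def
  proof (intro conjI allI impI)
    show "?I \<subseteq> {x. x < \<gamma>}" by auto
    fix b assume b: "b < \<gamma>"
    show "\<exists>c\<in>?I. b \<le> c"
    proof (cases "b \<le> \<delta>")
      case True then show ?thesis using dg by auto
    next
      case False then have "\<delta> \<le> b" by simp
      then show ?thesis using b by (intro bexI[of _ b]) auto
    qed
    assume "limpt ?I b"
    then have "\<delta> < b" by (rule lI)
    then show "b \<in> ?I" using b by simp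
  qed
  show "acc ?I = {}"
  proof (rule ccontr)
    assume "acc ?I \<noteq> {}"
    then obtain a where "a \<in> acc ?I" by blast
    then have "a \<in> ?I" "limpt ?I a" unfolding acc_def by auto
    then show False using lI gap limpt_UNIV by blast
  qed
qed



context setting
begin

definition Jok :: "'k pcond \<Rightarrow> 'k pcond \<Rightarrow> 'k \<Rightarrow> bool" where
  "Jok q p j \<longleftrightarrow> j < \<theta> \<and> idx q (gam q) \<le> j \<and> (\<forall>i. j \<le> i \<and> i < \<theta> \<longrightarrow>
      clb q (gam q) i \<inter> {x. x < gam p} = clb p (gam p) i \<and> (gam p < gam q \<longrightarrow> gam p \<in> clb q (gam q) i))"

definition jstar :: "'k pcond \<Rightarrow> 'k pcond option \<Rightarrow> 'k" where
  "jstar q prev = (case prev of None \<Rightarrow> idx q (gam q) | Some p \<Rightarrow> (LEAST j. Jok q p j))"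

definition Apart :: "'k pcond \<Rightarrow> 'k pcond option \<Rightarrow> 'k \<Rightarrow> 'k set" where
  "Apart q prev i = (if jstar q prev \<le> i then clb q (gam q) i
      else (case prev of None \<Rightarrow> {} | Some p \<Rightarrow> clb p (gam p) i \<union> {gam p}))"

definition Fs :: "'k pcond \<Rightarrow> 'k pcond option \<Rightarrow> 'k \<Rightarrow> 'k set" where
  "Fs q prev i = Apart q prev i \<union> {x. gam q \<le> x \<and> x < nextlim (gam q)}"

definition succ_cond :: "'k pcond \<Rightarrow> 'k pcond option \<Rightarrow> 'k pcond" where
  "succ_cond q prev = q\<lparr>gam := nextlim (gam q), idx := (idx q)(nextlim (gam q) := zk),
      clb := (clb q)(nextlim (gam q) := Fs q prev)\<rparr>"

definition prev_ok :: "'k pcond \<Rightarrow> 'k pcond option \<Rightarrow> bool" where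
  "prev_ok q prev \<longleftrightarrow> (case prev of None \<Rightarrow> True | Some p \<Rightarrow>
      valid_cond \<theta> p \<and> Pminus_le \<theta> (Some q) (Some p) \<and> idx p (gam p) = zk)"

lemma nextlim_levels:
  assumes "b \<le> nextlim d" "limpt UNIV b" shows "b = nextlim d \<or> b \<le> d"
proof (rule ccontr)
  assume "\<not> (b = nextlim d \<or> b \<le> d)"
  then have "b < nextlim d" "d < b" using assms(1) by auto
  then show False using nextlim(3)[of d b] assms(2) by simp
qed

lemma jstar_props:
  assumes q: "valid_cond \<theta> q" and pv: "prev_ok q prev"
  shows "jstar q prev < \<theta>" "idx q (gam q) \<le> jstar q prev"
    "\<And>p. prev = Some p \<Longrightarrow> Jok q p (jstar q prev)"
proof -
  have lq: "limpt UNIV (gam q)" using validD(1)[OF q] .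
  have lvq: "levok \<theta> (idx q) (clb q) (gam q)" using validD(2)[OF q order.refl lq] .
  have ex: "\<exists>j. Jok q p j" if ps: "prev = Some p" for p
  proof -
    have p: "valid_cond \<theta> p" "Pminus_le \<theta> (Some q) (Some p)" "idx p (gam p) = zk"
      using pv ps unfolding prev_ok_def by simp_all
    let ?g = "gam p" and ?d = "gam q"
    have gdag: "?g \<le> ?d \<and> agree \<theta> (idx p) (clb p) (idx q) (clb q) ?g" using p(2) unfolding le_Some .
    have gd: "?g \<le> ?d" using gdag by simp
    have ag: "agree \<theta> (idx p) (clb p) (idx q) (clb q) ?g" using gdag by simp
    have lg: "limpt UNIV ?g" using validD(1)[OF p(1)] .
    have agg: "idx q ?g = idx p ?g" "\<And>i. idx p ?g \<le> i \<Longrightarrow> i < \<theta> \<Longrightarrow> clb q ?g i = clb p ?g i"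
      using ag lg unfolding agree_def by simp_all
    have clbeq: "\<And>i. i < \<theta> \<Longrightarrow> clb q ?g i = clb p ?g i" using agg(2) p(3) by simp
    show ?thesis
    proof (cases "?g = ?d")
      case True
      have "Jok q p (idx q ?d)" unfolding Jok_def
      proof (intro conjI allI impI)
        show "idx q ?d < \<theta>" using levokD1[OF lvq] .
        show "idx q ?d \<le> idx q ?d" by simp
        fix i assume i: "idx q ?d \<le> i \<and> i < \<theta>"
        have "club_in (clb q ?d i) ?d" using levokD2[OF lvq] i by simp
        then have "clb q ?d i \<subseteq> {x. x < ?d}" by (rule club_sub)
        then show "clb q ?d i \<inter> {x. x < ?g} = clb p ?g i" using True clbeq i by auto
        assume "?g < ?d" then show "?g \<in> clb q ?d i" using True by simp
      qed
      then show ?thesis by blast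
    next
      case False
      then have gd': "?g < ?d" using gd by simp
      obtain j1 where j1: "j1 < \<theta>" "idx q ?d \<le> j1" "\<forall>i. j1 \<le> i \<and> i < \<theta> \<longrightarrow> clb q ?g i = clb q ?d i \<inter> {x. x < ?g}"
        using validD(3)[OF q gd order.refl lg lq gd'] unfolding pairok_def by blast
      have "?g \<in> acc {x. x < ?d}" using gd' lg unfolding acc_less_eq by simp
      then have "?g \<in> (\<Union>i\<in>{i. idx q ?d \<le> i \<and> i < \<theta>}. acc (clb q ?d i))" unfolding levokD4[OF lvq] .
      then obtain j2 where j2: "idx q ?d \<le> j2" "j2 < \<theta>" "?g \<in> acc (clb q ?d j2)" by auto
      let ?j = "max j1 j2"
      have "Jok q p ?j" unfolding Jok_def
      proof (intro conjI allI impI)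
        show "?j < \<theta>" using j1(1) j2(2) by simp
        show "idx q ?d \<le> ?j" using j1(2) by (simp add: le_max_iff_disj)
        fix i assume i: "?j \<le> i \<and> i < \<theta>"
        then have "j1 \<le> i" "j2 \<le> i" by simp_all
        then show "clb q ?d i \<inter> {x. x < ?g} = clb p ?g i" using j1(3) clbeq i by simp
        have "clb q ?d j2 \<subseteq> clb q ?d i" using levokD3[OF lvq] j2(1) \<open>j2 \<le> i\<close> i by simp
        then show "?g \<in> clb q ?d i" using j2(3) acc_sub by blast
      qed
      then show ?thesis by blast
    qed
  qed
  have JL: "Jok q p (jstar q prev)" if "prev = Some p" for p
  proof -
    have "Jok q p (LEAST j. Jok q p j)" using ex[OF that] by (rule LeastI_ex)
    then show ?thesis unfolding jstar_def using that by simp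
  qed
  show "Jok q p (jstar q prev)" if "prev = Some p" for p using JL[OF that] .
  show "jstar q prev < \<theta>"
  proof (cases prev)
    case None then show ?thesis unfolding jstar_def using levokD1[OF lvq] by simp
  next
    case (Some p) show ?thesis by (rule JL[OF Some, unfolded Jok_def, THEN conjunct1])
  qed
  show "idx q (gam q) \<le> jstar q prev"
  proof (cases prev)
    case None then show ?thesis unfolding jstar_def by simp
  next
    case (Some p) show ?thesis by (rule JL[OF Some, unfolded Jok_def, THEN conjunct2, THEN conjunct1])
  qed
qed

end


lemma levokI:
  assumes "I a < \<theta>" "\<And>i. I a \<le> i \<Longrightarrow> i < \<theta> \<Longrightarrow> club_in (C a i) a"
    "\<And>i j. I a \<le> i \<Longrightarrow> i \<le> j \<Longrightarrow> j < \<theta> \<Longrightarrow> C a i \<subseteq> C a j"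
    "acc {x. x < a} = (\<Union>i\<in>{i. I a \<le> i \<and> i < \<theta>}. acc (C a i))"
    "\<And>i a'. I a \<le> i \<Longrightarrow> i < \<theta> \<Longrightarrow> a' \<in> acc (C a i) \<Longrightarrow> cof_ge a' \<theta> \<Longrightarrow> I a' \<le> i \<and> C a' i = C a i \<inter> {x. x < a'}"
  shows "levok \<theta> I C a"
  unfolding levok_def
  apply (intro conjI)
      apply (rule assms(1))
     apply (intro allI impI, erule conjE, erule (1) assms(2))
    apply (intro allI impI, (erule conjE)+, erule (2) assms(3))
   apply (rule assms(4))
  apply (intro allI impI ballI, erule conjE, erule (3) assms(5))
  done

lemma Int_shrink:
  assumes "A \<inter> {x. x < d} = B" "(a::'k::wellorder) < d"
  shows "A \<inter> {x. x < a} = B \<inter> {x. x < a}"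
proof -
  have "{x. x < d} \<inter> {x. x < a} = {x. x < a}" using assms(2) by auto
  then have "A \<inter> {x. x < a} = (A \<inter> {x. x < d}) \<inter> {x. x < a}" by (simp add: Int_assoc)
  then show ?thesis using assms(1) by simp
qed

lemma levokD5':
  assumes l: "levok \<theta> I C a" and h: "I a \<le> i" "i < \<theta>" "a' \<in> acc (C a i)" "cof_ge a' \<theta>"
  shows "I a' \<le> i \<and> C a' i = C a i \<inter> {x. x < a'}"
proof -
  have "I a \<le> i \<and> i < \<theta> \<longrightarrow> (\<forall>a'\<in>acc (C a i). cof_ge a' \<theta> \<longrightarrow> I a' \<le> i \<and> C a' i = C a i \<inter> {x. x < a'})"
    using levokD5[OF l] by (rule spec)
  then have "\<forall>a'\<in>acc (C a i). cof_ge a' \<theta> \<longrightarrow> I a' \<le> i \<and> C a' i = C a i \<inter> {x. x < a'}"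
    using conjI[OF h(1,2)] by (rule mp)
  then have "cof_ge a' \<theta> \<longrightarrow> I a' \<le> i \<and> C a' i = C a i \<inter> {x. x < a'}" using h(3) by (rule bspec)
  then show ?thesis using h(4) by (rule mp)
qed

context setting
begin

lemma JokD:
  assumes "Jok q p j" "j \<le> i" "i < \<theta>"
  shows "clb q (gam q) i \<inter> {x. x < gam p} = clb p (gam p) i"
    "gam p < gam q \<Longrightarrow> gam p \<in> clb q (gam q) i"
  using assms unfolding Jok_def by simp_all


lemma succ_ok:
  assumes q: "valid_cond \<theta> q" and pv: "prev_ok q prev"
  defines "r \<equiv> succ_cond q prev"
  shows "valid_cond \<theta> r" "Pminus_le \<theta> (Some r) (Some q)" "idx r (gam r) = zk" "gam q < gam r"
    "\<And>p. prev = Some p \<Longrightarrow> coh \<theta> p r"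
proof -
  define d where "d = gam q"
  define \<gamma> where "\<gamma> = nextlim d"
  define F where "F = Fs q prev"
  define J where "J = jstar q prev"
  define Iv where "Iv = {x. d \<le> x \<and> x < \<gamma>}"
  have gr: "gam r = \<gamma>" unfolding r_def succ_cond_def \<gamma>_def d_def by simp
  have ir: "\<And>b. b \<noteq> \<gamma> \<Longrightarrow> idx r b = idx q b" "idx r \<gamma> = zk"
    unfolding r_def succ_cond_def \<gamma>_def d_def by simp_all
  have cr: "\<And>b. b \<noteq> \<gamma> \<Longrightarrow> clb r b = clb q b" "clb r \<gamma> = F"
    unfolding r_def succ_cond_def \<gamma>_def d_def F_def by simp_all
  have dg: "d < \<gamma>" and lg: "limpt UNIV \<gamma>" unfolding \<gamma>_def using nextlim by simp_all
  have gap: "\<And>x. d < x \<Longrightarrow> x < \<gamma> \<Longrightarrow> \<not> limpt UNIV x" unfolding \<gamma>_def using nextlim(3) by blast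
  have lev: "\<And>b. b \<le> \<gamma> \<Longrightarrow> limpt UNIV b \<Longrightarrow> b = \<gamma> \<or> b \<le> d" unfolding \<gamma>_def using nextlim_levels by blast
  have lq: "limpt UNIV d" unfolding d_def using validD(1)[OF q] .
  have lvq: "levok \<theta> (idx q) (clb q) d" unfolding d_def using validD(2)[OF q order.refl] validD(1)[OF q] .
  have J1: "J < \<theta>" and J2: "idx q d \<le> J" and J3: "\<And>p. prev = Some p \<Longrightarrow> Jok q p J"
    unfolding J_def d_def using jstar_props[OF q pv] by simp_all
  have agr: "agree \<theta> (idx q) (clb q) (idx r) (clb r) d"
    unfolding agree_def
  proof (intro allI impI)
    fix b assume "b \<le> d \<and> limpt UNIV b"
    then have "b \<noteq> \<gamma>" using dg by auto
    then show "idx r b = idx q b \<and> (\<forall>i. idx q b \<le> i \<and> i < \<theta> \<longrightarrow> clb r b i = clb q b i)"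
      using ir cr by simp
  qed
  have dIv: "d \<in> Iv" unfolding Iv_def using dg by simp
  have F1: "F i = clb q d i \<union> {d} \<union> Iv" if "J \<le> i" for i
    using that dIv unfolding F_def Fs_def Apart_def J_def Iv_def d_def \<gamma>_def by auto
  have F2: "F i = clb p (gam p) i \<union> {gam p} \<union> Iv" if "\<not> J \<le> i" "prev = Some p" for i p
    using that unfolding F_def Fs_def Apart_def J_def Iv_def d_def \<gamma>_def by auto
  have F3: "F i = Iv" if "\<not> J \<le> i" "prev = None" for i
    using that unfolding F_def Fs_def Apart_def J_def Iv_def d_def \<gamma>_def by auto
  have PP: "valid_cond \<theta> p \<and> gam p \<le> d \<and> agree \<theta> (idx p) (clb p) (idx q) (clb q) (gam p) \<and> idx p (gam p) = zk"
    if "prev = Some p" for p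
    using pv that unfolding prev_ok_def le_Some d_def by simp
  have clubq: "club_in (clb q d i) d" if "J \<le> i" "i < \<theta>" for i
    using levokD2[OF lvq] J2 that by (simp add: order.trans[OF J2 that(1)])
  have clubp: "club_in (clb p (gam p) i) (gam p)" if "prev = Some p" "i < \<theta>" for p i
  proof -
    have "valid_cond \<theta> p" "idx p (gam p) = zk" using PP[OF that(1)] by simp_all
    then have "levok \<theta> (idx p) (clb p) (gam p)" using validD(2) validD(1) by blast
    then have "\<forall>i. idx p (gam p) \<le> i \<and> i < \<theta> \<longrightarrow> club_in (clb p (gam p) i) (gam p)" by (rule levokD2)
    then show ?thesis using \<open>idx p (gam p) = zk\<close> that(2) by simp
  qed
  have ivl: "club_in Iv \<gamma>" "acc Iv = {}" unfolding Iv_def using iv_lemma[OF dg gap] by simp_all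
  have st1: "club_in (F i) \<gamma>" "\<And>a'. a' \<in> acc (F i) \<Longrightarrow> a' \<in> acc (clb q d i) \<or> a' = d"
    "F i \<inter> {x. x < d} = clb q d i" "d \<in> F i" "limpt (F i) d" "F i \<subseteq> {x. x < \<gamma>}"
    if "J \<le> i" "i < \<theta>" for i
    using struct_lemma[OF clubq[OF that] lq order.refl dg gap F1[OF that(1), unfolded Iv_def]] by simp_all
  have st2: "club_in (F i) \<gamma>" "\<And>a'. a' \<in> acc (F i) \<Longrightarrow> a' \<in> acc (clb p (gam p) i) \<or> a' = gam p"
    "F i \<inter> {x. x < gam p} = clb p (gam p) i" "gam p \<in> F i" "F i \<subseteq> {x. x < \<gamma>}"
    if "\<not> J \<le> i" "i < \<theta>" "prev = Some p" for i p
  proof -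
    have "valid_cond \<theta> p" "gam p \<le> d" using PP[OF that(3)] by simp_all
    then have "limpt UNIV (gam p)" using validD(1) by blast
    note S = struct_lemma[OF clubp[OF that(3,2)] this \<open>gam p \<le> d\<close> dg gap F2[OF that(1,3), unfolded Iv_def]]
    show "club_in (F i) \<gamma>" by (rule S(1))
    show "\<And>a'. a' \<in> acc (F i) \<Longrightarrow> a' \<in> acc (clb p (gam p) i) \<or> a' = gam p" by (rule S(2))
    show "F i \<inter> {x. x < gam p} = clb p (gam p) i" by (rule S(3))
    show "gam p \<in> F i" by (rule S(4))
    show "F i \<subseteq> {x. x < \<gamma>}" by (rule S(6))
  qed
  have Fclub: "club_in (F i) \<gamma>" if "i < \<theta>" for i
  proof (cases "J \<le> i")
    case True then show ?thesis using st1 that by simp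
  next
    case False then show ?thesis
    proof (cases prev)
      case None then show ?thesis using F3 False ivl by simp
    next
      case (Some p) then show ?thesis using st2 False that by simp
    qed
  qed
  have Fsub: "F i \<subseteq> {x. x < \<gamma>}" if "i < \<theta>" for i using club_sub[OF Fclub[OF that]] .
  have top: "levok \<theta> (idx r) (clb r) \<gamma>"
  proof (rule levokI)
    show "idx r \<gamma> < \<theta>" using ir(2) theta_pos by simp
    show "club_in (clb r \<gamma> i) \<gamma>" if "idx r \<gamma> \<le> i" "i < \<theta>" for i using Fclub[OF that(2)] cr(2) by simp
    show "clb r \<gamma> i \<subseteq> clb r \<gamma> j" if "idx r \<gamma> \<le> i" "i \<le> j" "j < \<theta>" for i j
    proof -
      have i\<theta>: "i < \<theta>" using le_less_trans[OF that(2,3)] .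
      have "F i \<subseteq> F j"
      proof (cases "J \<le> i")
        case True
        then have Jj: "J \<le> j" using that(2) by (rule order.trans)
        have "clb q d i \<subseteq> clb q d j" using levokD3[OF lvq] order.trans[OF J2 True] that(2,3) by simp
        then show ?thesis using F1[OF True] F1[OF Jj] by auto
      next
        case False
        show ?thesis
        proof (cases prev)
          case None
          then show ?thesis using F3[OF False None] Fsub that by (cases "J \<le> j") (auto simp: F1 F3)
        next
          case (Some p)
          have P: "valid_cond \<theta> p" "gam p \<le> d" "idx p (gam p) = zk" using PP[OF Some] by simp_all
          have lvp: "levok \<theta> (idx p) (clb p) (gam p)" using validD(2)[OF P(1) order.refl] validD(1)[OF P(1)] .
          have pij: "clb p (gam p) i \<subseteq> clb p (gam p) j" using levokD3[OF lvp] P(3) that(2,3) by simp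
          show ?thesis
          proof (cases "J \<le> j")
            case False2: False
            then show ?thesis using F2[OF False Some] F2[OF False2 Some] pij by auto
          next
            case True
            have e: "clb q d j \<inter> {x. x < gam p} = clb p (gam p) j" using JokD(1)[OF J3[OF Some] True that(3)] d_def by simp
            have gin: "gam p \<in> F j"
            proof (cases "gam p < d")
              case True2: True
              then have "gam p \<in> clb q d j" using JokD(2)[OF J3[OF Some] True that(3)] d_def by simp
              then show ?thesis using F1[OF True] by simp
            next
              case False
              then have "gam p = d" using P(2) by simp
              then show ?thesis using F1[OF True] by simp
            qed
            have "clb p (gam p) i \<subseteq> F j" using pij e F1[OF True] by auto
            then show ?thesis using F2[OF False Some] gin F1[OF True] by auto
          qed
        qed
      qed
      then show ?thesis using cr(2) by simp
    qed
    show "acc {x. x < \<gamma>} = (\<Union>i\<in>{i. idx r \<gamma> \<le> i \<and> i < \<theta>}. acc (clb r \<gamma> i))"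
    proof (rule set_eqI, rule iffI)
      fix \<xi> assume "\<xi> \<in> acc {x. x < \<gamma>}"
      then have x: "\<xi> < \<gamma>" "limpt UNIV \<xi>" unfolding acc_less_eq by simp_all
      then have "\<xi> = \<gamma> \<or> \<xi> \<le> d" using lev[OF less_imp_le[OF x(1)] x(2)] by simp
      then have "\<xi> \<le> d" using x(1) by auto
      then consider "\<xi> = d" | "\<xi> < d" by fastforce
      then have "\<exists>i. i < \<theta> \<and> \<xi> \<in> acc (F i)"
      proof cases
        case 1
        then have "\<xi> \<in> acc (F J)" using st1(4,5)[OF order.refl J1] unfolding acc_def by simp
        then show ?thesis using J1 by blast
      next
        case 2
        then have "\<xi> \<in> acc {x. x < d}" using x(2) unfolding acc_less_eq by simp
        then have "\<xi> \<in> (\<Union>i\<in>{i. idx q d \<le> i \<and> i < \<theta>}. acc (clb q d i))" unfolding levokD4[OF lvq] .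
        then obtain i where i: "idx q d \<le> i" "i < \<theta>" "\<xi> \<in> acc (clb q d i)" by auto
        define i' where "i' = max i J"
        have i': "i \<le> i'" "J \<le> i'" "i' < \<theta>" unfolding i'_def using i J1 by auto
        have "clb q d i \<subseteq> clb q d i'" using levokD3[OF lvq] i i' by simp
        also have "\<dots> \<subseteq> F i'" using F1[OF i'(2)] by auto
        finally have "\<xi> \<in> acc (F i')" using acc_mono i(3) by blast
        then show ?thesis using i' by blast
      qed
      then show "\<xi> \<in> (\<Union>i\<in>{i. idx r \<gamma> \<le> i \<and> i < \<theta>}. acc (clb r \<gamma> i))" using ir(2) cr(2) by auto
    next
      fix \<xi> assume "\<xi> \<in> (\<Union>i\<in>{i. idx r \<gamma> \<le> i \<and> i < \<theta>}. acc (clb r \<gamma> i))"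
      then obtain i where i: "i < \<theta>" "\<xi> \<in> acc (F i)" using cr(2) by auto
      then have "\<xi> \<in> F i" "limpt UNIV \<xi>" using acc_sub acc_lim by blast+
      then show "\<xi> \<in> acc {x. x < \<gamma>}" using Fsub[OF i(1)] unfolding acc_less_eq by auto
    qed
    show "idx r a' \<le> i \<and> clb r a' i = clb r \<gamma> i \<inter> {x. x < a'}"
      if "idx r \<gamma> \<le> i" "i < \<theta>" "a' \<in> acc (clb r \<gamma> i)" "cof_ge a' \<theta>" for i a'
    proof -
      have a'F: "a' \<in> acc (F i)" using that(3) cr(2) by simp
      have "a' < \<gamma>" using a'F acc_sub Fsub[OF that(2)] by blast
      then have a'n: "a' \<noteq> \<gamma>" by simp
      have "idx q a' \<le> i \<and> clb q a' i = F i \<inter> {x. x < a'}"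
      proof (cases "J \<le> i")
        case True
        note S = st1[OF True that(2)]
        have dd: "idx q d \<le> i" using J2 True by (rule order.trans)
        consider "a' \<in> acc (clb q d i)" | "a' = d" using S(2)[OF a'F] by blast
        then show ?thesis
        proof cases
          case 1
          have "idx q a' \<le> i \<and> clb q a' i = clb q d i \<inter> {x. x < a'}"
            using levokD5'[OF lvq dd that(2) 1 that(4)] .
          moreover have "a' < d" using 1 acc_sub club_sub[OF clubq[OF True that(2)]] by blast
          moreover have "F i \<inter> {x. x < a'} = clb q d i \<inter> {x. x < a'}"
            using Int_shrink[OF S(3) \<open>a' < d\<close>] .
          ultimately show ?thesis by simp
        next
          case 2
          then show ?thesis using S(3) dd by simp
        qed
      next
        case False
        show ?thesis
        proof (cases prev)
          case None
          then show ?thesis using a'F F3[OF False None] ivl(2) by simp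
        next
          case (Some p)
          note S = st2[OF False that(2) Some]
          have P: "valid_cond \<theta> p" "gam p \<le> d" "agree \<theta> (idx p) (clb p) (idx q) (clb q) (gam p)" "idx p (gam p) = zk"
            using PP[OF Some] by simp_all
          have lp: "limpt UNIV (gam p)" using validD(1)[OF P(1)] .
          have lvp: "levok \<theta> (idx p) (clb p) (gam p)" using validD(2)[OF P(1) order.refl lp] .
          have agp: "idx q b = idx p b \<and> (\<forall>i. idx p b \<le> i \<and> i < \<theta> \<longrightarrow> clb q b i = clb p b i)"
            if "b \<le> gam p" "limpt UNIV b" for b using P(3) that unfolding agree_def by simp
          consider "a' \<in> acc (clb p (gam p) i)" | "a' = gam p" using S(2)[OF a'F] by blast
          then show ?thesis
          proof cases
            case 1
            have h: "idx p a' \<le> i \<and> clb p a' i = clb p (gam p) i \<inter> {x. x < a'}"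
              using levokD5'[OF lvp _ that(2) 1 that(4)] P(4) by simp
            have "a' < gam p" using 1 acc_sub club_sub[OF clubp[OF Some that(2)]] by blast
            moreover have "limpt UNIV a'" using 1 acc_lim by blast
            ultimately have "idx q a' = idx p a'" "clb q a' i = clb p a' i" using agp[of a'] h that(2) by simp_all
            moreover have "F i \<inter> {x. x < a'} = clb p (gam p) i \<inter> {x. x < a'}"
              using Int_shrink[OF S(3) \<open>a' < gam p\<close>] .
            ultimately show ?thesis using h by simp
          next
            case 2
            have "idx q (gam p) = zk" "clb q (gam p) i = clb p (gam p) i" using agp[of "gam p"] lp P(4) that(2) by simp_all
            then show ?thesis using 2 S(3) by simp
          qed
        qed
      qed
      then show ?thesis using ir(1)[OF a'n] cr(1)[OF a'n] cr(2) by simp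
    qed
  qed
  have toppair: "pairok \<theta> (idx r) (clb r) a' \<gamma>" if h: "a' < \<gamma>" "limpt UNIV a'" for a'
  proof -
    have "a' = \<gamma> \<or> a' \<le> d" using lev[OF less_imp_le[OF h(1)] h(2)] by simp
    then have a'd: "a' \<le> d" using h(1) by auto
    have a'n: "a' \<noteq> \<gamma>" using h by simp
    show ?thesis
    proof (cases "a' = d")
      case True
      show ?thesis unfolding pairok_def
      proof (intro exI[of _ J] conjI allI impI)
        show "J < \<theta>" "idx r \<gamma> \<le> J" "idx r a' \<le> J" using J1 J2 ir True a'n by auto
        fix i assume i: "J \<le> i \<and> i < \<theta>"
        then show "clb r a' i = clb r \<gamma> i \<inter> {x. x < a'}" using st1(3)[of i] True cr a'n by simp
      qed
    next
      case False
      then have a'd2: "a' < d" using a'd by simp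
      obtain j1 where j1: "j1 < \<theta>" "idx q a' \<le> j1" "\<forall>i. j1 \<le> i \<and> i < \<theta> \<longrightarrow> clb q a' i = clb q d i \<inter> {x. x < a'}"
        using validD(3)[OF q, of a' d] a'd d_def lq h(2) a'd2 unfolding pairok_def by auto
      show ?thesis unfolding pairok_def
      proof (intro exI[of _ "max j1 J"] conjI allI impI)
        show "max j1 J < \<theta>" using j1(1) J1 by simp
        show "idx r \<gamma> \<le> max j1 J" using ir by simp
        show "idx r a' \<le> max j1 J" using ir a'n j1(2) by (simp add: le_max_iff_disj)
        fix i assume i: "max j1 J \<le> i \<and> i < \<theta>"
        then have "j1 \<le> i" "J \<le> i" "i < \<theta>" by simp_all
        then have "clb q a' i = clb q d i \<inter> {x. x < a'}" "F i \<inter> {x. x < d} = clb q d i"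
          using j1(3) st1(3) by simp_all
        then show "clb r a' i = clb r \<gamma> i \<inter> {x. x < a'}" using cr a'n a'd2 by auto
      qed
    qed
  qed
  show "valid_cond \<theta> r"
  proof (rule validI)
    show "limpt UNIV (gam r)" using gr lg by simp
    show "levok \<theta> (idx r) (clb r) a" if "a \<le> gam r" "limpt UNIV a" for a
    proof -
      have "a = \<gamma> \<or> a \<le> d" using lev that gr by simp
      then show ?thesis
      proof
        assume "a = \<gamma>" then show ?thesis using top by simp
      next
        assume ad: "a \<le> d"
        have "levok \<theta> (idx q) (clb q) a" using validD(2)[OF q] ad d_def that(2) by simp
        then show ?thesis using levok_transfer agree_mono[OF agr ad] that(2) by blast
      qed
    qed
    show "pairok \<theta> (idx r) (clb r) a' a"
      if "a' \<le> gam r" "a \<le> gam r" "limpt UNIV a'" "limpt UNIV a" "a' < a" for a' a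
    proof -
      have "a = \<gamma> \<or> a \<le> d" using lev that gr by simp
      then show ?thesis
      proof
        assume "a = \<gamma>" then show ?thesis using toppair that by simp
      next
        assume ad: "a \<le> d"
        have "a' \<le> d" using that(5) ad by simp
        then have "pairok \<theta> (idx q) (clb q) a' a" using validD(3)[OF q] ad d_def that by simp
        then show ?thesis using pairok_transfer[OF agree_mono[OF agr ad]] that by blast
      qed
    qed
  qed
  show "Pminus_le \<theta> (Some r) (Some q)" unfolding le_Some using gr dg agr d_def by simp
  show "idx r (gam r) = zk" using gr ir by simp
  show "gam q < gam r" using gr dg d_def by simp
  show "coh \<theta> p r" if "prev = Some p" for p
    unfolding coh_def
  proof (intro conjI allI impI)
    have P: "gam p \<le> d" using PP[OF that] by simp
    then show "gam p < gam r" using gr dg by simp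
    have gn: "gam p \<noteq> \<gamma>" using P dg by auto
    fix i assume i: "i < \<theta>"
    show "clb p (gam p) i = clb r (gam r) i \<inter> {x. x < gam p}"
    proof (cases "J \<le> i")
      case True
      have "F i \<inter> {x. x < gam p} = clb q d i \<inter> {x. x < gam p}" using F1[OF True] P Iv_def by auto
      then show ?thesis using JokD(1)[OF J3[OF that] True i] d_def gr cr(2) by simp
    next
      case False
      then show ?thesis using st2(3)[OF False i that] gr cr(2) by simp
    qed
    show "gam p \<in> clb r (gam r) i"
    proof (cases "J \<le> i")
      case True
      show ?thesis
      proof (cases "gam p < d")
        case True2: True
        then show ?thesis using JokD(2)[OF J3[OF that] True i] d_def gr cr(2) F1[OF True] by simp
      next
        case False
        then have "gam p = d" using P by simp
        then show ?thesis using st1(4)[OF True i] gr cr(2) by simp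
      qed
    next
      case False
      then show ?thesis using st2(4)[OF False i that] gr cr(2) by simp
    qed
  qed
qed

end


context setting
begin

definition limtop :: "'k pcond set \<Rightarrow> 'k" where
  "limtop S = (LEAST u. \<forall>p\<in>S. gam p < u)"

definition cov :: "'k pcond set \<Rightarrow> 'k \<Rightarrow> 'k pcond" where
  "cov S \<xi> = (SOME p. p \<in> S \<and> \<xi> \<le> gam p)"

definition limit_of :: "'k pcond set \<Rightarrow> 'k pcond set \<Rightarrow> 'k pcond" where
  "limit_of S E = \<lparr>gam = limtop S,
     idx = (\<lambda>\<xi>. if \<xi> = limtop S then zk else idx (cov S \<xi>) \<xi>),
     clb = (\<lambda>\<xi> i. if \<xi> = limtop S then (\<Union>p\<in>E. clb p (gam p) i) else clb (cov S \<xi>) \<xi> i)\<rparr>"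

lemma same_gam_agree:
  assumes "Pminus_le \<theta> (Some p1) (Some p2) \<or> Pminus_le \<theta> (Some p2) (Some p1)"
    "b \<le> gam p1" "b \<le> gam p2" "limpt UNIV b"
  shows "idx p1 b = idx p2 b \<and> (\<forall>i. idx p2 b \<le> i \<and> i < \<theta> \<longrightarrow> clb p1 b i = clb p2 b i)"
  using assms(1)
proof
  assume "Pminus_le \<theta> (Some p1) (Some p2)"
  then have "agree \<theta> (idx p2) (clb p2) (idx p1) (clb p1) (gam p2)" unfolding le_Some by simp
  then show ?thesis using assms(3,4) unfolding agree_def by simp
next
  assume "Pminus_le \<theta> (Some p2) (Some p1)"
  then have "agree \<theta> (idx p1) (clb p1) (idx p2) (clb p2) (gam p1)" unfolding le_Some by simp
  then have "idx p2 b = idx p1 b \<and> (\<forall>i. idx p1 b \<le> i \<and> i < \<theta> \<longrightarrow> clb p2 b i = clb p1 b i)"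
    using assms(2,4) unfolding agree_def by simp
  then show ?thesis by simp
qed

lemma limit_ok:
  assumes Sv: "\<And>p. p \<in> S \<Longrightarrow> valid_cond \<theta> p" and Sne: "S \<noteq> {}"
    and chain: "\<And>p1 p2. p1 \<in> S \<Longrightarrow> p2 \<in> S \<Longrightarrow> Pminus_le \<theta> (Some p1) (Some p2) \<or> Pminus_le \<theta> (Some p2) (Some p1)"
    and ES: "E \<subseteq> S" and Ez: "\<And>p. p \<in> E \<Longrightarrow> idx p (gam p) = zk"
    and Ecoh: "\<And>p1 p2. p1 \<in> E \<Longrightarrow> p2 \<in> E \<Longrightarrow> gam p1 < gam p2 \<Longrightarrow> coh \<theta> p1 p2"
    and cof: "\<And>p. p \<in> S \<Longrightarrow> \<exists>p'\<in>E. gam p < gam p'"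
    and bdd: "\<exists>u. \<forall>p\<in>S. gam p < u"
  defines "L \<equiv> limit_of S E"
  shows "valid_cond \<theta> L" "\<And>p. p \<in> S \<Longrightarrow> Pminus_le \<theta> (Some L) (Some p)" "idx L (gam L) = zk"
    "\<And>p. p \<in> S \<Longrightarrow> gam p < gam L" "\<And>p. p \<in> E \<Longrightarrow> coh \<theta> p L"
proof -
  define \<gamma> where "\<gamma> = limtop S"
  define U where "U = (\<lambda>i. \<Union>p\<in>E. clb p (gam p) i)"
  have gL: "gam L = \<gamma>" unfolding L_def limit_of_def \<gamma>_def by simp
  have iL: "idx L \<gamma> = zk" "\<And>b. b \<noteq> \<gamma> \<Longrightarrow> idx L b = idx (cov S b) b"
    unfolding L_def limit_of_def \<gamma>_def by simp_all
  have cL: "clb L \<gamma> = U" "\<And>b. b \<noteq> \<gamma> \<Longrightarrow> clb L b = clb (cov S b) b"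
    unfolding L_def limit_of_def \<gamma>_def U_def by auto
  have G1: "\<And>p. p \<in> S \<Longrightarrow> gam p < \<gamma>"
  proof -
    have "\<forall>p\<in>S. gam p < limtop S" unfolding limtop_def using bdd by (rule LeastI_ex)
    then show "\<And>p. p \<in> S \<Longrightarrow> gam p < \<gamma>" unfolding \<gamma>_def by blast
  qed
  have G2: "\<exists>p\<in>S. b \<le> gam p" if "b < \<gamma>" for b
  proof (rule ccontr)
    assume "\<not> (\<exists>p\<in>S. b \<le> gam p)"
    then have "\<forall>p\<in>S. gam p < b" by (auto simp: not_le)
    then have "limtop S \<le> b" unfolding limtop_def by (rule Least_le)
    then show False using that \<gamma>_def by simp
  qed
  have G3: "\<exists>p\<in>E. b < gam p" if h: "b < \<gamma>" for b
  proof -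
    obtain p where "p \<in> S" "b \<le> gam p" using G2[OF h] by blast
    then obtain p' where "p' \<in> E" "gam p < gam p'" using cof by blast
    then show ?thesis using \<open>b \<le> gam p\<close> by (meson le_less_trans)
  qed
  have lg: "limpt UNIV \<gamma>" unfolding limpt_def
  proof (intro conjI allI impI)
    obtain p where "p \<in> S" using Sne by blast
    then show "\<exists>b. b < \<gamma>" using G1 by blast
    fix b assume "b < \<gamma>"
    then obtain p where "p \<in> E" "b < gam p" using G3 by blast
    then show "\<exists>a\<in>UNIV. b < a \<and> a < \<gamma>" using G1 ES by blast
  qed
  have covP: "cov S b \<in> S" "b \<le> gam (cov S b)" if h: "b < \<gamma>" for b
  proof -
    have ex: "\<exists>p. p \<in> S \<and> b \<le> gam p" using G2[OF h] by blast
    have "cov S b \<in> S \<and> b \<le> gam (cov S b)" unfolding cov_def using ex by (rule someI_ex)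
    then show "cov S b \<in> S" "b \<le> gam (cov S b)" by simp_all
  qed
  have AGR: "agree \<theta> (idx p) (clb p) (idx L) (clb L) (gam p)" if pS: "p \<in> S" for p
    unfolding agree_def
  proof (intro allI impI)
    fix b assume b: "b \<le> gam p \<and> limpt UNIV b"
    then have bg: "b < \<gamma>" using G1[OF pS] by (meson le_less_trans)
    then have bn: "b \<noteq> \<gamma>" by simp
    have "idx (cov S b) b = idx p b \<and> (\<forall>i. idx p b \<le> i \<and> i < \<theta> \<longrightarrow> clb (cov S b) b i = clb p b i)"
      using same_gam_agree[OF chain[OF covP(1)[OF bg] pS] covP(2)[OF bg]] b by simp
    then show "idx L b = idx p b \<and> (\<forall>i. idx p b \<le> i \<and> i < \<theta> \<longrightarrow> clb L b i = clb p b i)"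
      using iL(2)[OF bn] cL(2)[OF bn] by simp
  qed
  have lvE: "levok \<theta> (idx p) (clb p) (gam p)" "idx p (gam p) = zk" "limpt UNIV (gam p)" if "p \<in> E" for p
  proof -
    have v: "valid_cond \<theta> p" using Sv ES that by blast
    show "limpt UNIV (gam p)" using validD(1)[OF v] .
    then show "levok \<theta> (idx p) (clb p) (gam p)" using validD(2)[OF v order.refl] by simp
    show "idx p (gam p) = zk" using Ez[OF that] .
  qed
  have clubE: "club_in (clb p (gam p) i) (gam p)" if "p \<in> E" "i < \<theta>" for p i
  proof -
    have "\<forall>i. idx p (gam p) \<le> i \<and> i < \<theta> \<longrightarrow> club_in (clb p (gam p) i) (gam p)" using levokD2[OF lvE(1)[OF that(1)]] .
    then show ?thesis using lvE(2)[OF that(1)] that(2) by simp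
  qed
  have Ucap: "U i \<inter> {x. x < gam p} = clb p (gam p) i" if pE: "p \<in> E" and i: "i < \<theta>" for p i
  proof (rule set_eqI, rule iffI)
    fix x assume "x \<in> U i \<inter> {x. x < gam p}"
    then obtain p' where p': "p' \<in> E" "x \<in> clb p' (gam p') i" "x < gam p" unfolding U_def by blast
    consider "gam p' < gam p" | "gam p' = gam p" | "gam p < gam p'" by fastforce
    then show "x \<in> clb p (gam p) i"
    proof cases
      case 1
      then have "clb p' (gam p') i = clb p (gam p) i \<inter> {x. x < gam p'}" using Ecoh[OF p'(1) pE] i unfolding coh_def by simp
      then show ?thesis using p'(2) by simp
    next
      case 2
      have p'S: "p' \<in> S" and pS: "p \<in> S" using p'(1) pE ES by auto
      have le1: "gam p \<le> gam p'" using 2 by simp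
      have "idx p' (gam p) = idx p (gam p) \<and> (\<forall>i. idx p (gam p) \<le> i \<and> i < \<theta> \<longrightarrow> clb p' (gam p) i = clb p (gam p) i)"
        using same_gam_agree[OF chain[OF p'S pS] le1 order.refl lvE(3)[OF pE]] .
      then have "clb p' (gam p) i = clb p (gam p) i" using lvE(2)[OF pE] i by simp
      then show ?thesis using p'(2) 2 by simp
    next
      case 3
      then have "clb p (gam p) i = clb p' (gam p') i \<inter> {x. x < gam p}" using Ecoh[OF pE p'(1)] i unfolding coh_def by simp
      then show ?thesis using p'(2,3) by simp
    qed
  next
    fix x assume "x \<in> clb p (gam p) i"
    then show "x \<in> U i \<inter> {x. x < gam p}" unfolding U_def using pE club_sub[OF clubE[OF pE i]] by blast
  qed
  have Usub: "U i \<subseteq> {x. x < \<gamma>}" if "i < \<theta>" for i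
  proof
    fix x assume "x \<in> U i"
    then obtain p where p: "p \<in> E" "x \<in> clb p (gam p) i" unfolding U_def by blast
    then have "x < gam p" using club_sub[OF clubE[OF p(1) that]] by blast
    then show "x \<in> {x. x < \<gamma>}" using less_trans[OF \<open>x < gam p\<close> G1[OF subsetD[OF ES p(1)]]] by simp
  qed
  have Ucut: "U i \<inter> {x. x < b} \<subseteq> clb p (gam p) i" if h: "p \<in> E" "i < \<theta>" "b \<le> gam p" for p i b
  proof
    fix x assume x: "x \<in> U i \<inter> {x. x < b}"
    then have "x < b" by simp
    then have "x < gam p" using h(3) by (rule less_le_trans)
    then have "x \<in> U i \<inter> {x. x < gam p}" using x by simp
    then show "x \<in> clb p (gam p) i" using Ucap[OF h(1,2)] by simp
  qed
  have top: "levok \<theta> (idx L) (clb L) \<gamma>"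
  proof (rule levokI)
    show "idx L \<gamma> < \<theta>" using iL(1) theta_pos by simp
    show "club_in (clb L \<gamma> i) \<gamma>" if hi: "idx L \<gamma> \<le> i" "i < \<theta>" for i
      unfolding cL(1) club_in_def
    proof (intro conjI allI impI)
      show "U i \<subseteq> {x. x < \<gamma>}" using Usub hi(2) .
      fix b assume b: "b < \<gamma>"
      then obtain p where p: "p \<in> E" "b < gam p" using G3 by blast
      then obtain c where "c \<in> clb p (gam p) i" "b \<le> c" using clubE[OF p(1) hi(2)] unfolding club_in_def by blast
      then show "\<exists>c\<in>U i. b \<le> c" unfolding U_def using p(1) by blast
      assume "limpt (U i) b"
      then have "limpt (clb p (gam p) i) b" using limpt_below Ucut[OF p(1) hi(2) less_imp_le[OF p(2)]] by blast
      then have "b \<in> clb p (gam p) i" using clubE[OF p(1) hi(2)] p(2) unfolding club_in_def by blast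
      then show "b \<in> U i" unfolding U_def using p(1) by blast
    qed
    show "clb L \<gamma> i \<subseteq> clb L \<gamma> j" if "idx L \<gamma> \<le> i" "i \<le> j" "j < \<theta>" for i j
      unfolding cL(1) U_def
    proof (rule UN_mono)
      fix p assume p: "p \<in> E"
      have "\<forall>i j. idx p (gam p) \<le> i \<and> i \<le> j \<and> j < \<theta> \<longrightarrow> clb p (gam p) i \<subseteq> clb p (gam p) j"
        using levokD3[OF lvE(1)[OF p]] .
      then show "clb p (gam p) i \<subseteq> clb p (gam p) j" using lvE(2)[OF p] that(2,3) by simp
    qed simp
    show "acc {x. x < \<gamma>} = (\<Union>i\<in>{i. idx L \<gamma> \<le> i \<and> i < \<theta>}. acc (clb L \<gamma> i))"
    proof (rule set_eqI, rule iffI)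
      fix \<xi> assume "\<xi> \<in> acc {x. x < \<gamma>}"
      then have x: "\<xi> < \<gamma>" "limpt UNIV \<xi>" unfolding acc_less_eq by simp_all
      then obtain p where p: "p \<in> E" "\<xi> < gam p" using G3 by blast
      then have "\<xi> \<in> acc {x. x < gam p}" using x(2) unfolding acc_less_eq by simp
      then have "\<xi> \<in> (\<Union>i\<in>{i. idx p (gam p) \<le> i \<and> i < \<theta>}. acc (clb p (gam p) i))"
        unfolding levokD4[OF lvE(1)[OF p(1)]] .
      then obtain i where i: "i < \<theta>" "\<xi> \<in> acc (clb p (gam p) i)" by auto
      have "clb p (gam p) i \<subseteq> U i" unfolding U_def using p(1) by blast
      then have "\<xi> \<in> acc (U i)" using acc_mono i(2) by blast
      then show "\<xi> \<in> (\<Union>i\<in>{i. idx L \<gamma> \<le> i \<and> i < \<theta>}. acc (clb L \<gamma> i))" using i(1) iL(1) cL(1) by auto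
    next
      fix \<xi> assume "\<xi> \<in> (\<Union>i\<in>{i. idx L \<gamma> \<le> i \<and> i < \<theta>}. acc (clb L \<gamma> i))"
      then obtain i where i: "i < \<theta>" "\<xi> \<in> acc (U i)" using cL(1) by auto
      then show "\<xi> \<in> acc {x. x < \<gamma>}" using acc_mono[OF Usub[OF i(1)]] by blast
    qed
    show "idx L a' \<le> i \<and> clb L a' i = clb L \<gamma> i \<inter> {x. x < a'}"
      if "idx L \<gamma> \<le> i" "i < \<theta>" "a' \<in> acc (clb L \<gamma> i)" "cof_ge a' \<theta>" for i a'
    proof -
      have a'U: "a' \<in> acc (U i)" using that(3) cL(1) by simp
      then have a'U2: "a' \<in> U i" "limpt (U i) a'" unfolding acc_def by simp_all
      have "a' < \<gamma>" using a'U2(1) Usub[OF that(2)] by blast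
      then obtain p where p: "p \<in> E" "a' < gam p" using G3 by blast
      have "a' \<in> clb p (gam p) i" using a'U2(1) Ucap[OF p(1) that(2)] p(2) by blast
      moreover have "limpt (clb p (gam p) i) a'" using limpt_below[OF a'U2(2) Ucut[OF p(1) that(2) less_imp_le[OF p(2)]]] .
      ultimately have a'acc: "a' \<in> acc (clb p (gam p) i)" unfolding acc_def by simp
      have h: "idx p a' \<le> i \<and> clb p a' i = clb p (gam p) i \<inter> {x. x < a'}"
        using levokD5'[OF lvE(1)[OF p(1)] _ that(2) a'acc that(4)] lvE(2)[OF p(1)] by simp
      have la: "limpt UNIV a'" using a'acc acc_lim by blast
      have ag: "idx L a' = idx p a' \<and> (\<forall>i. idx p a' \<le> i \<and> i < \<theta> \<longrightarrow> clb L a' i = clb p a' i)"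
        using AGR[of p] ES p la unfolding agree_def by (auto simp: less_imp_le)
      have "U i \<inter> {x. x < a'} = clb p (gam p) i \<inter> {x. x < a'}" using Int_shrink[OF Ucap[OF p(1) that(2)] p(2)] .
      then show ?thesis using h ag that(2) cL(1) by simp
    qed
  qed
  have toppair: "pairok \<theta> (idx L) (clb L) a' \<gamma>" if h: "a' < \<gamma>" "limpt UNIV a'" for a'
  proof -
    obtain p where p: "p \<in> E" "a' < gam p" using G3 h(1) by blast
    have v: "valid_cond \<theta> p" using Sv ES p(1) by blast
    obtain j where j: "j < \<theta>" "idx p (gam p) \<le> j" "idx p a' \<le> j"
      "\<forall>i. j \<le> i \<and> i < \<theta> \<longrightarrow> clb p a' i = clb p (gam p) i \<inter> {x. x < a'}"
      using validD(3)[OF v less_imp_le[OF p(2)] order.refl h(2) lvE(3)[OF p(1)] p(2)] unfolding pairok_def by blast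
    have ag: "idx L a' = idx p a' \<and> (\<forall>i. idx p a' \<le> i \<and> i < \<theta> \<longrightarrow> clb L a' i = clb p a' i)"
      using AGR[of p] ES p h(2) unfolding agree_def by (auto simp: less_imp_le)
    show ?thesis unfolding pairok_def
    proof (intro exI[of _ j] conjI allI impI)
      show "j < \<theta>" "idx L \<gamma> \<le> j" "idx L a' \<le> j" using j(1,3) iL(1) ag by simp_all
      fix i assume i: "j \<le> i \<and> i < \<theta>"
      have "U i \<inter> {x. x < a'} = clb p (gam p) i \<inter> {x. x < a'}" using Int_shrink[OF Ucap[OF p(1)] p(2)] i by simp
      moreover have "clb L a' i = clb p a' i" using ag j(3) i by (simp add: order.trans[OF j(3)])
      ultimately show "clb L a' i = clb L \<gamma> i \<inter> {x. x < a'}" using j(4) i cL(1) by simp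
    qed
  qed
  show "valid_cond \<theta> L"
  proof (rule validI)
    show "limpt UNIV (gam L)" using gL lg by simp
    show "levok \<theta> (idx L) (clb L) a" if "a \<le> gam L" "limpt UNIV a" for a
    proof (cases "a = \<gamma>")
      case True then show ?thesis using top by simp
    next
      case False
      then have ag: "a < \<gamma>" using that gL by simp
      have "levok \<theta> (idx (cov S a)) (clb (cov S a)) a"
        using validD(2)[OF Sv[OF covP(1)[OF ag]] covP(2)[OF ag] that(2)] .
      then show ?thesis using levok_transfer agree_mono[OF AGR[OF covP(1)[OF ag]] covP(2)[OF ag]] that(2) by blast
    qed
    show "pairok \<theta> (idx L) (clb L) a' a"
      if "a' \<le> gam L" "a \<le> gam L" "limpt UNIV a'" "limpt UNIV a" "a' < a" for a' a
    proof (cases "a = \<gamma>")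
      case True then show ?thesis using toppair that gL by simp
    next
      case False
      then have ag: "a < \<gamma>" using that gL by simp
      have "pairok \<theta> (idx (cov S a)) (clb (cov S a)) a' a"
        using validD(3)[OF Sv[OF covP(1)[OF ag]] _ covP(2)[OF ag] that(3,4,5)] covP(2)[OF ag] that(5) by simp
      then show ?thesis using pairok_transfer[OF agree_mono[OF AGR[OF covP(1)[OF ag]] covP(2)[OF ag]]] that by blast
    qed
  qed
  show "Pminus_le \<theta> (Some L) (Some p)" if "p \<in> S" for p
    unfolding le_Some using G1[OF that] AGR[OF that] gL by simp
  show "idx L (gam L) = zk" using gL iL by simp
  show "gam p < gam L" if "p \<in> S" for p using G1[OF that] gL by simp
  show "coh \<theta> p L" if pE: "p \<in> E" for p
    unfolding coh_def
  proof (intro conjI allI impI)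
    show "gam p < gam L" using G1 ES pE gL by auto
    fix i assume i: "i < \<theta>"
    show "clb p (gam p) i = clb L (gam L) i \<inter> {x. x < gam p}" using Ucap[OF pE i] gL cL(1) by simp
    obtain p' where p': "p' \<in> E" "gam p < gam p'" using cof ES pE by blast
    then have "gam p \<in> clb p' (gam p') i" using Ecoh[OF pE p'(1)] i unfolding coh_def by simp
    then have "gam p \<in> U i" using p'(1) unfolding U_def by blast
    then show "gam p \<in> clb L (gam L) i" using gL cL(1) by simp
  qed
qed

end


lemma Pminus_Some[simp]: "Some p \<in> Pminus \<theta> \<longleftrightarrow> valid_cond \<theta> p"
  unfolding Pminus_def by auto

lemma Pminus_None[simp]: "None \<in> Pminus \<theta>"
  unfolding Pminus_def by auto

lemma le_refl: "Pminus_le \<theta> x x"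
proof (cases x)
  case None then show ?thesis by simp
next
  case (Some p) then show ?thesis by (simp add: le_Some agree_def)
qed

lemma restr_less[simp]: "\<eta> < \<alpha> \<Longrightarrow> restr s one \<alpha> \<eta> = s \<eta>"
  unfolding restr_def by simp

context setting
begin

lemma lim0_not_osucc: "lim0 (x::'k) \<Longrightarrow> x \<noteq> osucc y"
proof
  assume l: "lim0 x" and e: "x = osucc y"
  have "y < x" using e osucc_gt by simp
  then obtain d where "d < x" "y < d" using l unfolding lim0_def by blast
  then show False using osucc_least[of y d] e by simp
qed

lemma decomp_unique:
  "lim0 (l::'k) \<Longrightarrow> lim0 l' \<Longrightarrow> (osucc ^^ k) l = (osucc ^^ k') l' \<Longrightarrow> k = k'"
proof (induction k arbitrary: k')
  case 0
  then show ?case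
  proof (cases k')
    case (Suc m)
    then have "l = osucc ((osucc ^^ m) l')" using 0 by simp
    then show ?thesis using lim0_not_osucc 0 by blast
  qed simp
next
  case (Suc k)
  show ?case
  proof (cases k')
    case 0
    then have "l' = osucc ((osucc ^^ k) l)" using Suc by simp
    then show ?thesis using lim0_not_osucc Suc by blast
  next
    case (Suc m)
    then have "(osucc ^^ k) l = (osucc ^^ m) l'" using Suc.prems osucc_inj by simp
    then show ?thesis using Suc.IH Suc.prems Suc by simp
  qed
qed

lemma even_osucc_not: "ord_even (x::'k) \<Longrightarrow> \<not> ord_even (osucc x)"
proof
  assume "ord_even x" "ord_even (osucc x)"
  then obtain l n l' m where "lim0 l" "x = (osucc ^^ (2*n)) l" "lim0 l'" "osucc x = (osucc ^^ (2*m)) l'"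
    unfolding ord_even_def lim0_def by blast
  then have "(osucc ^^ (Suc (2*n))) l = (osucc ^^ (2*m)) l'" by simp
  then have "Suc (2*n) = 2*m" using decomp_unique \<open>lim0 l\<close> \<open>lim0 l'\<close> by blast
  then show False by presburger
qed

definition strat :: "'k \<Rightarrow> ('k \<Rightarrow> 'k pcond option) \<Rightarrow> 'k pcond option" where
  "strat \<alpha> h = (if \<forall>\<eta><\<alpha>. h \<eta> = None then None
     else if lim0 \<alpha> then Some (limit_of {p. \<exists>\<eta><\<alpha>. h \<eta> = Some p} {p. \<exists>\<eta><\<alpha>. ord_even \<eta> \<and> h \<eta> = Some p})
     else Some (succ_cond (the (h (pred \<alpha>))) (h (pred (pred \<alpha>)))))"

definition EvenLoc :: "('k \<Rightarrow> 'k pcond option) \<Rightarrow> 'k \<Rightarrow> 'k pcond option \<Rightarrow> bool" where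
  "EvenLoc s \<beta> x \<longleftrightarrow> (x = None \<longrightarrow> (\<forall>\<eta><\<beta>. s \<eta> = None)) \<and>
     (\<forall>p. x = Some p \<longrightarrow> idx p (gam p) = zk \<and> (\<forall>\<eta><\<beta>. \<forall>q. s \<eta> = Some q \<longrightarrow> gam q < gam p)
        \<and> (\<forall>\<eta><\<beta>. ord_even \<eta> \<longrightarrow> (\<forall>p'. s \<eta> = Some p' \<longrightarrow> coh \<theta> p' p)))"

definition Loc :: "('k \<Rightarrow> 'k pcond option) \<Rightarrow> 'k \<Rightarrow> bool" where
  "Loc s \<beta> \<longleftrightarrow> s \<beta> \<in> Pminus \<theta> \<and> (\<forall>\<eta><\<beta>. Pminus_le \<theta> (s \<beta>) (s \<eta>)) \<and> (ord_even \<beta> \<longrightarrow> EvenLoc s \<beta> (s \<beta>))"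

lemma step:
  assumes ev: "ord_even \<alpha>" and L: "\<And>\<beta>. \<beta> < \<alpha> \<Longrightarrow> Loc s \<beta>"
  defines "x \<equiv> strat \<alpha> (restr s None \<alpha>)"
  shows "x \<in> Pminus \<theta>" "\<And>\<eta>. \<eta> < \<alpha> \<Longrightarrow> Pminus_le \<theta> x (s \<eta>)" "EvenLoc s \<alpha> x"
    "(\<forall>\<beta>. \<alpha> \<le> \<beta>) \<Longrightarrow> x = None"
proof -
  have LP: "s \<beta> \<in> Pminus \<theta>" if "\<beta> < \<alpha>" for \<beta> using L[OF that] unfolding Loc_def by simp
  have LL: "Pminus_le \<theta> (s \<beta>) (s \<eta>)" if "\<beta> < \<alpha>" "\<eta> < \<beta>" for \<beta> \<eta> using L[OF that(1)] that(2) unfolding Loc_def by simp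
  have LE: "EvenLoc s \<beta> (s \<beta>)" if "\<beta> < \<alpha>" "ord_even \<beta>" for \<beta> using L[OF that(1)] that(2) unfolding Loc_def by simp
  have hs: "\<And>\<eta>. \<eta> < \<alpha> \<Longrightarrow> restr s None \<alpha> \<eta> = s \<eta>" by simp
  have G: "x \<in> Pminus \<theta> \<and> (\<forall>\<eta><\<alpha>. Pminus_le \<theta> x (s \<eta>)) \<and> EvenLoc s \<alpha> x \<and> ((\<forall>\<beta>. \<alpha> \<le> \<beta>) \<longrightarrow> x = None)"
  proof (cases "\<forall>\<eta><\<alpha>. s \<eta> = None")
    case True
    then have x: "x = None" unfolding x_def strat_def by simp
    have "\<forall>\<eta><\<alpha>. Pminus_le \<theta> x (s \<eta>)" using True x by simp
    moreover have "EvenLoc s \<alpha> x" unfolding EvenLoc_def using True x by simp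
    ultimately show ?thesis using x by simp
  next
    case False
    then obtain \<eta>0 p0 where e0: "\<eta>0 < \<alpha>" "s \<eta>0 = Some p0" by auto
    have nb: "\<not> (\<forall>\<beta>. \<alpha> \<le> \<beta>)" using e0(1) by (auto simp: not_le)
    have hn: "\<not> (\<forall>\<eta><\<alpha>. restr s None \<alpha> \<eta> = None)" using False by simp
    show ?thesis
    proof (cases "lim0 \<alpha>")
      case True
      define S where "S = {p. \<exists>\<eta><\<alpha>. s \<eta> = Some p}"
      define E where "E = {p. \<exists>\<eta><\<alpha>. ord_even \<eta> \<and> s \<eta> = Some p}"
      have S': "{p. \<exists>\<eta><\<alpha>. restr s None \<alpha> \<eta> = Some p} = S" unfolding S_def by auto
      have E': "{p. \<exists>\<eta><\<alpha>. ord_even \<eta> \<and> restr s None \<alpha> \<eta> = Some p} = E" unfolding E_def by auto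
      have x: "x = Some (limit_of S E)" unfolding x_def strat_def using hn True S' E' by simp
      have Sv: "valid_cond \<theta> p" if hh: "p \<in> S" for p
      proof -
        obtain \<eta> where "\<eta> < \<alpha>" "s \<eta> = Some p" using hh unfolding S_def by blast
        then show ?thesis using LP by fastforce
      qed
      have Sne: "S \<noteq> {}" using e0 unfolding S_def by blast
      have chain: "Pminus_le \<theta> (Some p1) (Some p2) \<or> Pminus_le \<theta> (Some p2) (Some p1)" if hh: "p1 \<in> S" "p2 \<in> S" for p1 p2
      proof -
        obtain \<eta>1 where 1: "\<eta>1 < \<alpha>" "s \<eta>1 = Some p1" using hh(1) unfolding S_def by blast
        obtain \<eta>2 where 2: "\<eta>2 < \<alpha>" "s \<eta>2 = Some p2" using hh(2) unfolding S_def by blast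
        consider "\<eta>1 < \<eta>2" | "\<eta>1 = \<eta>2" | "\<eta>2 < \<eta>1" by fastforce
        then show ?thesis
        proof cases
          case a: 1 then show ?thesis using LL[OF 2(1) a] 1 2 by simp
        next
          case 2 then show ?thesis using \<open>s \<eta>1 = Some p1\<close> \<open>s \<eta>2 = Some p2\<close> le_refl by simp
        next
          case a: 3 then show ?thesis using LL[OF 1(1) a] 1 2 by simp
        qed
      qed
      have ES: "E \<subseteq> S" unfolding E_def S_def by blast
      have Ez: "idx p (gam p) = zk" if hh: "p \<in> E" for p
      proof -
        obtain \<eta> where "\<eta> < \<alpha>" "ord_even \<eta>" "s \<eta> = Some p" using hh unfolding E_def by blast
        then show ?thesis using LE[of \<eta>] unfolding EvenLoc_def by simp
      qed
      have Ecoh: "coh \<theta> p1 p2" if hh: "p1 \<in> E" "p2 \<in> E" "gam p1 < gam p2" for p1 p2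
      proof -
        obtain \<eta>1 where 1: "\<eta>1 < \<alpha>" "ord_even \<eta>1" "s \<eta>1 = Some p1" using hh(1) unfolding E_def by blast
        obtain \<eta>2 where 2: "\<eta>2 < \<alpha>" "ord_even \<eta>2" "s \<eta>2 = Some p2" using hh(2) unfolding E_def by blast
        consider "\<eta>1 < \<eta>2" | "\<eta>1 = \<eta>2" | "\<eta>2 < \<eta>1" by fastforce
        then show ?thesis
        proof cases
          case a: 1 then show ?thesis using LE[OF 2(1,2)] 1 2 unfolding EvenLoc_def by simp
        next
          case 2 then show ?thesis using 1 \<open>s \<eta>2 = Some p2\<close> hh(3) by simp
        next
          case a: 3
          then have "gam p2 < gam p1" using LE[OF 1(1,2)] 1 2 unfolding EvenLoc_def by simp
          then show ?thesis using hh(3) by simp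
        qed
      qed
      have cof: "\<exists>p'\<in>E. gam p < gam p'" if hh: "p \<in> S" for p
      proof -
        obtain \<eta> where e: "\<eta> < \<alpha>" "s \<eta> = Some p" using hh unfolding S_def by blast
        obtain \<eta>' where e': "ord_even \<eta>'" "\<eta> \<le> \<eta>'" "\<eta>' < \<alpha>" using even_cofinal[OF True e(1)] by blast
        define \<eta>2 where "\<eta>2 = osucc (osucc \<eta>')"
        have e2a: "\<eta>2 < \<alpha>" unfolding \<eta>2_def using lim0_osucc[OF True] e'(3) by blast
        have e2b: "ord_even \<eta>2" unfolding \<eta>2_def using even_osucc2 e'(1) by blast
        have "\<eta>' < \<eta>2" unfolding \<eta>2_def using osucc_gt[of \<eta>'] osucc_gt[of "osucc \<eta>'"] by (rule less_trans)
        then have e2c: "\<eta> < \<eta>2" using le_less_trans[OF e'(2)] by blast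
        note e2 = e2a e2b e2c
        have EL: "EvenLoc s \<eta>2 (s \<eta>2)" using LE e2 by simp
        show ?thesis
        proof (cases "s \<eta>2")
          case None
          then have "s \<eta> = None" using EL e2(3) unfolding EvenLoc_def by simp
          then show ?thesis using e by simp
        next
          case (Some p2)
          then have "gam p < gam p2" using EL e2(3) e(2) unfolding EvenLoc_def by simp
          moreover have "p2 \<in> E" unfolding E_def using e2 Some by blast
          ultimately show ?thesis by blast
        qed
      qed
      have bdd: "\<exists>u. \<forall>p\<in>S. gam p < u"
      proof -
        have "gam ` S \<subseteq> (\<lambda>\<eta>. gam (the (s \<eta>))) ` {x. x < \<alpha>}" unfolding S_def by force
        then have "gam ` S \<lesssim> {x. x < \<alpha>}" by (rule subset_image_lepoll)
        then obtain u where "\<forall>y\<in>gam ` S. y < u" using small_bdd by blast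
        then show ?thesis by blast
      qed
      note LO = limit_ok[of S E, OF Sv Sne chain ES Ez Ecoh cof bdd]
      define Lc where "Lc = limit_of S E"
      have lower: "\<forall>\<eta><\<alpha>. Pminus_le \<theta> x (s \<eta>)"
      proof (intro allI impI)
        fix \<eta> assume h: "\<eta> < \<alpha>"
        show "Pminus_le \<theta> x (s \<eta>)"
        proof (cases "s \<eta>")
          case None then show ?thesis by simp
        next
          case (Some p)
          then have "p \<in> S" unfolding S_def using h by blast
          then show ?thesis using LO(2) x Some by simp
        qed
      qed
      have EL: "EvenLoc s \<alpha> x" unfolding EvenLoc_def
      proof (intro conjI)
        show "x = None \<longrightarrow> (\<forall>\<eta><\<alpha>. s \<eta> = None)" using x by simp
        show "\<forall>p. x = Some p \<longrightarrow> idx p (gam p) = zk \<and> (\<forall>\<eta><\<alpha>. \<forall>q. s \<eta> = Some q \<longrightarrow> gam q < gam p) \<and> (\<forall>\<eta><\<alpha>. ord_even \<eta> \<longrightarrow> (\<forall>p'. s \<eta> = Some p' \<longrightarrow> coh \<theta> p' p))"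
        proof (intro allI impI)
        fix p assume xp: "x = Some p"
        then have pL: "p = limit_of S E" using x by simp
        have A1: "idx p (gam p) = zk" using LO(3) pL by simp
        have A2: "\<forall>\<eta><\<alpha>. \<forall>q. s \<eta> = Some q \<longrightarrow> gam q < gam p"
        proof (intro allI impI)
          fix \<eta> q assume "\<eta> < \<alpha>" "s \<eta> = Some q"
          then have "q \<in> S" unfolding S_def by blast
          then show "gam q < gam p" using LO(4) pL by simp
        qed
        have A3: "\<forall>\<eta><\<alpha>. ord_even \<eta> \<longrightarrow> (\<forall>p'. s \<eta> = Some p' \<longrightarrow> coh \<theta> p' p)"
        proof (intro allI impI)
          fix \<eta> p' assume "\<eta> < \<alpha>" "ord_even \<eta>" "s \<eta> = Some p'"
          then have "p' \<in> E" unfolding E_def by blast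
          then show "coh \<theta> p' p" using LO(5) pL by simp
        qed
        show "idx p (gam p) = zk \<and> (\<forall>\<eta><\<alpha>. \<forall>q. s \<eta> = Some q \<longrightarrow> gam q < gam p) \<and> (\<forall>\<eta><\<alpha>. ord_even \<eta> \<longrightarrow> (\<forall>p'. s \<eta> = Some p' \<longrightarrow> coh \<theta> p' p))"
          by (rule conjI[OF A1 conjI[OF A2 A3]])
        qed
      qed
      show ?thesis using x LO(1) lower EL nb by simp
    next
      case False
      obtain \<beta> where \<beta>: "ord_even \<beta>" "\<alpha> = osucc (osucc \<beta>)" using even_succ[OF ev False] by blast
      have o1: "osucc \<beta> < \<alpha>" "\<beta> < osucc \<beta>" "\<beta> < \<alpha>" using \<beta>(2) osucc_gt by (auto intro: less_trans)
      have pa: "pred \<alpha> = osucc \<beta>" "pred (pred \<alpha>) = \<beta>" using \<beta>(2) by simp_all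
      have x0: "x = Some (succ_cond (the (s (osucc \<beta>))) (s \<beta>))"
        unfolding x_def strat_def using hn False pa o1 by simp
      have "s (osucc \<beta>) \<noteq> None"
      proof (cases "\<eta>0 = osucc \<beta>")
        case True then show ?thesis using e0 by simp
      next
        case False
        then have "\<eta>0 < osucc \<beta>" using e0(1) \<beta>(2) less_osucc_iff by (simp add: le_less)
        then have "Pminus_le \<theta> (s (osucc \<beta>)) (Some p0)" using LL[OF o1(1)] e0(2) by metis
        then show ?thesis by (cases "s (osucc \<beta>)") simp_all
      qed
      then obtain q where q: "s (osucc \<beta>) = Some q" by blast
      have qv: "valid_cond \<theta> q" using LP[OF o1(1)] q by simp
      have pv: "prev_ok q (s \<beta>)"
      proof (cases "s \<beta>")
        case None then show ?thesis unfolding prev_ok_def by simp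
      next
        case (Some p)
        have "valid_cond \<theta> p" using LP[OF o1(3)] Some by simp
        moreover have "Pminus_le \<theta> (Some q) (Some p)" using LL[OF o1(1,2)] q Some by simp
        moreover have "idx p (gam p) = zk" using LE[OF o1(3) \<beta>(1)] Some unfolding EvenLoc_def by simp
        ultimately show ?thesis unfolding prev_ok_def using Some by simp
      qed
      define r where "r = succ_cond q (s \<beta>)"
      note SO = succ_ok[OF qv pv, folded r_def]
      have x: "x = Some r" using x0 q r_def by simp
      have below: "\<eta> = osucc \<beta> \<or> \<eta> < osucc \<beta>" if "\<eta> < \<alpha>" for \<eta>
        using that \<beta>(2) less_osucc_iff by (auto simp: le_less)
      have lower: "\<forall>\<eta><\<alpha>. Pminus_le \<theta> x (s \<eta>)"
      proof (intro allI impI)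
        fix \<eta> assume h: "\<eta> < \<alpha>"
        show "Pminus_le \<theta> x (s \<eta>)"
        proof (cases "\<eta> = osucc \<beta>")
          case True then show ?thesis using SO(2) x q by simp
        next
          case False
          then have "\<eta> < osucc \<beta>" using below[OF h] by simp
          then have "Pminus_le \<theta> (Some q) (s \<eta>)" using LL[OF o1(1)] q by metis
          then show ?thesis using le_trans SO(2) x by blast
        qed
      qed
      have EL: "EvenLoc s \<alpha> x" unfolding EvenLoc_def
      proof (intro conjI)
        show "x = None \<longrightarrow> (\<forall>\<eta><\<alpha>. s \<eta> = None)" using x by simp
        show "\<forall>p. x = Some p \<longrightarrow> idx p (gam p) = zk \<and> (\<forall>\<eta><\<alpha>. \<forall>q. s \<eta> = Some q \<longrightarrow> gam q < gam p) \<and> (\<forall>\<eta><\<alpha>. ord_even \<eta> \<longrightarrow> (\<forall>p'. s \<eta> = Some p' \<longrightarrow> coh \<theta> p' p))"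
        proof (intro allI impI)
        fix p assume xp: "x = Some p"
        then have pr: "p = r" using x by simp
        have A1: "idx p (gam p) = zk" using SO(3) pr by simp
        have A2: "\<forall>\<eta><\<alpha>. \<forall>q. s \<eta> = Some q \<longrightarrow> gam q < gam p"
        proof (intro allI impI)
          fix \<eta> q' assume h: "\<eta> < \<alpha>" "s \<eta> = Some q'"
          have "gam q' \<le> gam q"
          proof (cases "\<eta> = osucc \<beta>")
            case True then show ?thesis using h q by simp
          next
            case False
            then have "\<eta> < osucc \<beta>" using below[OF h(1)] by simp
            then have "Pminus_le \<theta> (Some q) (Some q')" using LL[OF o1(1)] q h(2) by metis
            then show ?thesis unfolding le_Some by simp
          qed
          then show "gam q' < gam p" using SO(4) pr by (simp add: le_less_trans)
        qed
        have A3: "\<forall>\<eta><\<alpha>. ord_even \<eta> \<longrightarrow> (\<forall>p'. s \<eta> = Some p' \<longrightarrow> coh \<theta> p' p)"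
        proof (intro allI impI)
          fix \<eta> p' assume h: "\<eta> < \<alpha>" "ord_even \<eta>" "s \<eta> = Some p'"
          have "\<eta> \<noteq> osucc \<beta>" using h(2) even_osucc_not[OF \<beta>(1)] by auto
          then have "\<eta> < osucc \<beta>" using below[OF h(1)] by simp
          then have "\<eta> \<le> \<beta>" using less_osucc_iff by simp
          show "coh \<theta> p' p"
          proof (cases "\<eta> = \<beta>")
            case True then show ?thesis using SO(5) h(3) pr by simp
          next
            case False
            then have eb: "\<eta> < \<beta>" using \<open>\<eta> \<le> \<beta>\<close> by simp
            have ELb: "EvenLoc s \<beta> (s \<beta>)" using LE[OF o1(3) \<beta>(1)] .
            show ?thesis
            proof (cases "s \<beta>")
              case None
              then have "s \<eta> = None" using ELb eb unfolding EvenLoc_def by simp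
              then show ?thesis using h(3) by simp
            next
              case (Some pb)
              then have "coh \<theta> p' pb" using ELb eb h(2,3) unfolding EvenLoc_def by simp
              moreover have "coh \<theta> pb r" using SO(5) Some by simp
              ultimately show ?thesis using coh_trans pr by blast
            qed
          qed
        qed
        show "idx p (gam p) = zk \<and> (\<forall>\<eta><\<alpha>. \<forall>q. s \<eta> = Some q \<longrightarrow> gam q < gam p) \<and> (\<forall>\<eta><\<alpha>. ord_even \<eta> \<longrightarrow> (\<forall>p'. s \<eta> = Some p' \<longrightarrow> coh \<theta> p' p))"
          by (rule conjI[OF A1 conjI[OF A2 A3]])
        qed
      qed
      show ?thesis using x SO(1) lower EL nb by simp
    qed
  qed
  show "x \<in> Pminus \<theta>" using G by simp
  show "Pminus_le \<theta> x (s \<eta>)" if "\<eta> < \<alpha>" for \<eta> using G that by simp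
  show "EvenLoc s \<alpha> x" using G by simp
  show "(\<forall>\<beta>. \<alpha> \<le> \<beta>) \<Longrightarrow> x = None" using G by simp
qed

end


context setting
begin

lemma play_good:
  "(\<forall>\<beta><\<alpha>. s \<beta> \<in> Pminus \<theta>) \<Longrightarrow> (\<forall>\<beta><\<alpha>. ord_even \<beta> \<longrightarrow> s \<beta> = strat \<beta> (restr s None \<beta>))
   \<Longrightarrow> (\<forall>\<beta><\<alpha>. \<not> ord_even \<beta> \<longrightarrow> (\<forall>\<eta><\<beta>. Pminus_le \<theta> (s \<beta>) (s \<eta>))) \<Longrightarrow> \<forall>\<beta><\<alpha>. Loc s \<beta>"
proof (induction \<alpha> rule: less_induct)
  case (less \<alpha>)
  show ?case
  proof (intro allI impI)
    fix \<beta> assume b: "\<beta> < \<alpha>"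
    have p1: "\<forall>\<gamma><\<beta>. s \<gamma> \<in> Pminus \<theta>" using less.prems(1) b less_trans by blast
    have p2: "\<forall>\<gamma><\<beta>. ord_even \<gamma> \<longrightarrow> s \<gamma> = strat \<gamma> (restr s None \<gamma>)" using less.prems(2) b less_trans by blast
    have p3: "\<forall>\<gamma><\<beta>. \<not> ord_even \<gamma> \<longrightarrow> (\<forall>\<eta><\<gamma>. Pminus_le \<theta> (s \<gamma>) (s \<eta>))" using less.prems(3) b less_trans by blast
    have IH: "\<forall>\<gamma><\<beta>. Loc s \<gamma>" using less.IH[OF b p1 p2 p3] .
    show "Loc s \<beta>"
    proof (cases "ord_even \<beta>")
      case True
      have sb: "s \<beta> = strat \<beta> (restr s None \<beta>)" using less.prems(2) b True by blast
      have L: "\<And>\<gamma>. \<gamma> < \<beta> \<Longrightarrow> Loc s \<gamma>" using IH by blast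
      note S = step[OF True L, folded sb]
      have "\<forall>\<eta><\<beta>. Pminus_le \<theta> (s \<beta>) (s \<eta>)" using S(2) by blast
      then show ?thesis unfolding Loc_def using S(1) S(3) by simp
    next
      case False
      have "s \<beta> \<in> Pminus \<theta>" using less.prems(1) b by blast
      moreover have "\<forall>\<eta><\<beta>. Pminus_le \<theta> (s \<beta>) (s \<eta>)" using less.prems(3) b False by blast
      ultimately show ?thesis unfolding Loc_def using False by simp
    qed
  qed
qed

end

theorem lemma3p11:
  fixes \<theta> :: "'k::wellorder"
  assumes "univ_uncountable_regular TYPE('k)"
    and "uncountable_regular \<theta>"
  shows "strat_closed_full (Pminus \<theta>) (Pminus_le \<theta>) None TYPE('k)"
proof -
  have U1: "\<not> countable (UNIV :: 'k set)" and U2: "\<forall>a::'k. {x. x < a} \<prec> (UNIV :: 'k set)"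
    and U3: "\<forall>X :: 'k set. (\<forall>a. \<exists>x\<in>X. a \<le> x) \<longrightarrow> (UNIV :: 'k set) \<lesssim> X"
    using assms(1) unfolding univ_uncountable_regular_def by simp_all
  have T1: "\<not> countable {x. x < \<theta>}" using assms(2) unfolding uncountable_regular_def by simp
  interpret setting \<theta>
  proof
    fix x :: 'k
    show "\<exists>y. x < y"
    proof (rule ccontr)
      assume "\<not> (\<exists>y. x < y)"
      then have "\<forall>a. \<exists>y\<in>{x}. a \<le> y" by (auto simp: not_less)
      then have "(UNIV :: 'k set) \<lesssim> {x}" using U3 by blast
      then have "countable (UNIV :: 'k set)" using countable_lepoll[of "{x}"] by simp
      then show False using U1 by simp
    qed
  next
    fix X :: "'k set" assume c: "countable X"
    show "\<exists>u. \<forall>x\<in>X. x < u"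
    proof (rule ccontr)
      assume "\<not> (\<exists>u. \<forall>x\<in>X. x < u)"
      then have "\<forall>a. \<exists>x\<in>X. a \<le> x" by (auto simp: not_less)
      then have "(UNIV :: 'k set) \<lesssim> X" using U3 by blast
      then have "countable (UNIV :: 'k set)" using countable_lepoll c by blast
      then show False using U1 by simp
    qed
  next
    fix X :: "'k set" and a :: 'k assume c: "X \<lesssim> {x. x < a}"
    show "\<exists>u. \<forall>x\<in>X. x < u"
    proof (rule ccontr)
      assume "\<not> (\<exists>u. \<forall>x\<in>X. x < u)"
      then have "\<forall>a. \<exists>x\<in>X. a \<le> x" by (auto simp: not_less)
      then have "(UNIV :: 'k set) \<lesssim> X" using U3 by blast
      then have "(UNIV :: 'k set) \<lesssim> {x. x < a}" using c lepoll_trans by blast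
      then have "(UNIV :: 'k set) \<prec> UNIV" using U2 lesspoll_trans1 by blast
      then show False using lesspoll_not_refl by blast
    qed
  next
    have "{x. x < \<theta>} \<noteq> {}" using T1 by (metis countable_empty)
    then obtain y where "y < \<theta>" by auto
    then show "zk < \<theta>" using zk_le[of y] by (rule le_less_trans[rotated])
  qed
  show ?thesis unfolding strat_closed_full_def
  proof (intro exI[of _ strat] allI impI)
    fix \<alpha> :: 'k and s :: "'k \<Rightarrow> 'k pcond option"
    assume h: "ord_even \<alpha> \<and> (\<forall>\<beta><\<alpha>. s \<beta> \<in> Pminus \<theta>)
        \<and> (\<forall>\<beta><\<alpha>. ord_even \<beta> \<longrightarrow> s \<beta> = strat \<beta> (restr s None \<beta>))
        \<and> (\<forall>\<beta><\<alpha>. \<not> ord_even \<beta> \<longrightarrow> (\<forall>\<eta><\<beta>. Pminus_le \<theta> (s \<beta>) (s \<eta>)))"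
    then have L: "\<forall>\<beta><\<alpha>. Loc s \<beta>" using play_good by blast
    have ev: "ord_even \<alpha>" using h by simp
    note S = step[OF ev, of s]
    have L': "\<And>\<beta>. \<beta> < \<alpha> \<Longrightarrow> Loc s \<beta>" using L by blast
    show "strat \<alpha> (restr s None \<alpha>) \<in> Pminus \<theta> \<and>
          (\<forall>\<eta><\<alpha>. Pminus_le \<theta> (strat \<alpha> (restr s None \<alpha>)) (s \<eta>)) \<and>
          ((\<forall>\<beta>. \<alpha> \<le> \<beta>) \<longrightarrow> strat \<alpha> (restr s None \<alpha>) = None)"
      using S[OF L'] by blast
  qed
qed


end
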